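(* Let $d\geq 3$ and $n_1\geq\cdots\geq n_d\geq 2$ be integers. Let $N$ and $M$ be the numbers of vertices and edges of $\textsc{Grid}(n_1,\ldots,n_{d-1})$, let $\tilde f$ be a $Q_{d-1}$-magic vertex labeling of $\textsc{Grid}(n_1,\ldots,n_{d-1})$ with magic sum $S$, and let $\tilde g$ be a $Q_{d-1}$-magic edge labeling of $\textsc{Grid}(n_1,\ldots,n_{d-1})$ with magic sum $S'$. Define $g$ on the edges of $\textsc{Grid}(n_1,\ldots,n_d)$ as follows, writing every edge as $e=\{\mathbf x,\mathbf y\}$ with $\mathbf y=\mathbf x+\mathbf e_i$ for a unique $i\in[d]$ ($\mathbf e_i$ the $i$-th unit vector), and writing $\mathbf x'=(x_1,\ldots,x_{d-1})$, $\mathbf y'=(y_1,\ldots,y_{d-1})$: (i) if $i=d$: $g(e)=\tilde f(\mathbf x')+n_dM+(x_d-1)N$ if $x_1+\cdots+x_{d-1}$ is odd, and $g(e)=\tilde f(\mathbf x')+n_dM+(n_d-1-x_d)N$ if $x_1+\cdots+x_{d-1}$ is even; (ii) if $d$ is odd and $i\leq d-1$, or $d$ is even and $i\leq d-2$: $g(e)=\tilde g(\{\mathbf x',\mathbf y'\})+(x_d-1)M$ if $i$ is odd, and $g(e)=\tilde g(\{\mathbf x',\mathbf y'\})+(n_d-x_d)M$ if $i$ is even; (iii) if $d$ is even and $i=d-1$: $g(e)=\tilde g(\{\mathbf x',\mathbf y'\})+(x_d-1)M$ if $x_1+\cdots+x_{d-2}$ is odd, and $g(e)=\tilde g(\{\mathbf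 x',\mathbf y'\})+(n_d-x_d)M$ if $x_1+\cdots+x_{d-2}$ is even. Then $g$ is a $Q_d$-magic edge labeling of $\textsc{Grid}(n_1,\ldots,n_d)$ with $Q_d$-magic sum $$S+2S'+2^{d-2}(n_d-2)N+2^{d-2}\bigl(2n_d+(d-1)(n_d-1)\bigr)M.$$
   Context: $[k]=\{1,\ldots,k\}$. The grid graph $\textsc{Grid}(n_1,\ldots,n_m)$ has vertex set $[n_1]\times\cdots\times[n_m]$ and edge set $\{\{\mathbf x,\mathbf y\}:\sum_{i=1}^m|x_i-y_i|=1\}$. The $m$-cube $Q_m$ is $\textsc{Grid}(2,\ldots,2)$ ($m$ entries). For graphs $G=(V,E)$ and $H$: a bijection $f:V\to\{1,\ldots,|V|\}$ is an $H$-magic vertex labeling if there is a constant $c$ with $\sum_{v\in V(H')}f(v)=c$ for every subgraph $H'\subseteq G$ isomorphic to $H$; a bijection $g:E\to\{1,\ldots,|E|\}$ is an $H$-magic edge labeling if there is a constant $c'$ with $\sum_{e\in E(H')}g(e)=c'$ for every subgraph $H'\subseteq G$ isomorphic to $H$. The constants $c$, $c'$ are the $H$-magic sums. *)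

theory Defs
  imports Main
begin

definition grid_V :: "nat list \<Rightarrow> nat list set" where
  "grid_V ns = {x. length x = length ns \<and> (\<forall>i<length ns. 1 \<le> x ! i \<and> x ! i \<le> ns ! i)}"

definition grid_E :: "nat list \<Rightarrow> nat list set set" where
  "grid_E ns = {{x, y} | x y. x \<in> grid_V ns \<and> y \<in> grid_V ns \<and>
      (\<Sum>i<length ns. nat \<bar>int (x ! i) - int (y ! i)\<bar>) = 1}"

definition cube :: "nat \<Rightarrow> nat list" where
  "cube m = replicate m 2"

text \<open>phi maps H=(VH,EH) onto a subgraph of G=(VG,EG); the subgraphs of G isomorphic to H are
  exactly the graphs (phi ` VH, (\<lambda>e. phi ` e) ` EH) for such phi.\<close>
definition subgraph_embedding ::
  "'a set \<Rightarrow> 'a set set \<Rightarrow> 'b set \<Rightarrow> 'b set set \<Rightarrow> ('a \<Rightarrow> 'b) \<Rightarrow> bool" where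
  "subgraph_embedding VH EH VG EG phi \<longleftrightarrow>
     inj_on phi VH \<and> phi ` VH \<subseteq> VG \<and> (\<forall>e\<in>EH. phi ` e \<in> EG)"

definition magic_vertex_labeling ::
  "'b set \<Rightarrow> 'b set set \<Rightarrow> 'a set \<Rightarrow> 'a set set \<Rightarrow> ('b \<Rightarrow> nat) \<Rightarrow> nat \<Rightarrow> bool" where
  "magic_vertex_labeling VG EG VH EH f c \<longleftrightarrow>
     bij_betw f VG {1..card VG} \<and>
     (\<forall>phi. subgraph_embedding VH EH VG EG phi \<longrightarrow> (\<Sum>v\<in>phi ` VH. f v) = c)"

definition magic_edge_labeling ::
  "'b set \<Rightarrow> 'b set set \<Rightarrow> 'a set \<Rightarrow> 'a set set \<Rightarrow> ('b set \<Rightarrow> nat) \<Rightarrow> nat \<Rightarrow> bool" where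
  "magic_edge_labeling VG EG VH EH g c \<longleftrightarrow>
     bij_betw g EG {1..card EG} \<and>
     (\<forall>phi. subgraph_embedding VH EH VG EG phi \<longrightarrow>
        (\<Sum>e\<in>(\<lambda>e. phi ` e) ` EH. g e) = c)"

text \<open>x + e_i for 1-indexed i.\<close>
definition add_unit :: "nat list \<Rightarrow> nat \<Rightarrow> nat list" where
  "add_unit x i = x[i - 1 := x ! (i - 1) + 1]"

end

theory Submission
  imports Defs "HOL-Library.FuncSet"
begin


lemma grid_V_iff: "x \<in> grid_V ns \<longleftrightarrow> length x = length ns \<and> (\<forall>i<length ns. 1 \<le> x!i \<and> x!i \<le> ns!i)"
  by (simp add: grid_V_def)

lemma finite_grid_V: "finite (grid_V ns)"
proof -
  have "grid_V ns \<subseteq> {xs. set xs \<subseteq> {0..Max (insert 0 (set ns))} \<and> length xs = length ns}"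
  proof
    fix x assume x: "x \<in> grid_V ns"
    have "set x \<subseteq> {0..Max (insert 0 (set ns))}"
    proof
      fix a assume "a \<in> set x"
      then obtain i where i: "i < length x" "x!i = a" by (auto simp: in_set_conv_nth)
      have "ns!i \<in> set ns" using x i by (simp add: grid_V_iff)
      then have "ns!i \<le> Max (insert 0 (set ns))" by simp
      moreover have "x!i \<le> ns!i" using x i by (auto simp: grid_V_iff)
      ultimately show "a \<in> {0..Max (insert 0 (set ns))}" using i by auto
    qed
    then show "x \<in> {xs. set xs \<subseteq> {0..Max (insert 0 (set ns))} \<and> length xs = length ns}"
      using x by (simp add: grid_V_iff)
  qed
  then show ?thesis by (rule finite_subset) (simp add: finite_lists_length_eq)
qed

definition ep :: "nat list \<times> nat \<Rightarrow> nat list set" where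
  "ep = (\<lambda>(x,k). {x, x[k := x!k+1]})"
definition gP :: "nat list \<Rightarrow> (nat list \<times> nat) set" where
  "gP ns = {(x,k). x \<in> grid_V ns \<and> k < length ns \<and> x!k < ns!k}"

lemma sum_eq_1:
  fixes f :: "nat \<Rightarrow> nat"
  assumes "(\<Sum>i<n. f i) = (1::nat)"
  shows "\<exists>k<n. f k = 1 \<and> (\<forall>i<n. i \<noteq> k \<longrightarrow> f i = 0)"
proof -
  obtain k where k: "k < n" "f k \<noteq> 0"
    using assms by (metis sum.neutral lessThan_iff zero_neq_one)
  have s: "(\<Sum>i<n. f i) = f k + (\<Sum>i\<in>{..<n}-{k}. f i)"
    using k sum.remove[OF finite_lessThan[of n], of k f] by simp
  then have "f k = 1" using assms k by linarith
  moreover have "(\<Sum>i\<in>{..<n}-{k}. f i) = 0" using s assms \<open>f k = 1\<close> by linarith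
  then have "\<forall>i<n. i \<noteq> k \<longrightarrow> f i = 0" by simp
  ultimately show ?thesis using k by blast
qed

lemma upd_in_grid: "(x,k) \<in> gP ns \<Longrightarrow> x[k := x!k+1] \<in> grid_V ns"
  by (auto simp: gP_def grid_V_iff nth_list_update)

lemma grid_E_eq: "grid_E ns = ep ` gP ns"
proof
  show "grid_E ns \<subseteq> ep ` gP ns"
  proof
    fix e assume "e \<in> grid_E ns"
    then obtain x y where e: "e = {x,y}" and x: "x \<in> grid_V ns" and y: "y \<in> grid_V ns"
      and s: "(\<Sum>i<length ns. nat \<bar>int (x ! i) - int (y ! i)\<bar>) = 1"
      unfolding grid_E_def by blast
    from sum_eq_1[OF s] obtain k where k: "k < length ns" "nat \<bar>int (x ! k) - int (y ! k)\<bar> = 1"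
      and o: "\<forall>i<length ns. i \<noteq> k \<longrightarrow> nat \<bar>int (x ! i) - int (y ! i)\<bar> = 0" by blast
    have o': "\<forall>i<length ns. i \<noteq> k \<longrightarrow> x!i = y!i" using o by auto
    have lx: "length x = length ns" and ly: "length y = length ns" using x y by (auto simp: grid_V_iff)
    consider "y!k = x!k + 1" | "x!k = y!k + 1" using k(2) by linarith
    then show "e \<in> ep ` gP ns"
    proof cases
      case 1
      have "y = x[k := x!k+1]"
        by (rule nth_equalityI) (use lx ly o' 1 k in \<open>auto simp: nth_list_update\<close>)
      moreover have "(x,k) \<in> gP ns" using x y k 1 ly by (auto simp: gP_def grid_V_iff)
      ultimately show ?thesis using e by (auto simp: ep_def image_iff intro!: bexI[of _ "(x,k)"])
    next
      case 2
      have "x = y[k := y!k+1]"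
        by (rule nth_equalityI) (use lx ly o' 2 k in \<open>auto simp: nth_list_update\<close>)
      moreover have "(y,k) \<in> gP ns" using x y k 2 lx by (auto simp: gP_def grid_V_iff)
      ultimately show ?thesis using e by (auto simp: ep_def image_iff intro!: bexI[of _ "(y,k)"])
    qed
  qed
next
  show "ep ` gP ns \<subseteq> grid_E ns"
  proof
    fix e assume "e \<in> ep ` gP ns"
    then obtain x k where xk: "(x,k) \<in> gP ns" and e: "e = {x, x[k := x!k+1]}"
      by (auto simp: ep_def)
    have x: "x \<in> grid_V ns" and k: "k < length ns" using xk by (auto simp: gP_def)
    have lx: "length x = length ns" using x by (simp add: grid_V_iff)
    have "(\<Sum>i<length ns. nat \<bar>int (x ! i) - int (x[k := x!k+1] ! i)\<bar>) = (\<Sum>i<length ns. if i = k then 1 else 0)"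
      by (rule sum.cong) (use lx in \<open>auto simp: nth_list_update\<close>)
    also have "\<dots> = 1" using k by simp
    finally show "e \<in> grid_E ns" unfolding grid_E_def using e x upd_in_grid[OF xk] by blast
  qed
qed

lemma inj_ep: "inj_on ep (gP ns)"
proof (rule inj_onI)
  fix a b assume a: "a \<in> gP ns" and b: "b \<in> gP ns" and eq: "ep a = ep b"
  obtain x k where ak: "a = (x,k)" by (cases a)
  obtain y l where bl: "b = (y,l)" by (cases b)
  have lx: "length x = length ns" "k < length ns" using a ak by (auto simp: gP_def grid_V_iff)
  have ly: "length y = length ns" "l < length ns" using b bl by (auto simp: gP_def grid_V_iff)
  have e: "{x, x[k := x!k+1]} = {y, y[l := y!l+1]}" using eq ak bl by (simp add: ep_def)
  have nx: "x[k := x!k+1] \<noteq> x"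
  proof
    assume "x[k := x!k+1] = x"
    then have "x[k := x!k+1]!k = x!k" by simp
    then show False using lx by simp
  qed
  show "a = b"
  proof (cases "x = y")
    case True
    then have u: "x[k := x!k+1] = x[l := x!l+1]" using e nx by (auto simp: doubleton_eq_iff)
    have "k = l"
    proof (rule ccontr)
      assume "k \<noteq> l"
      have "x[k := x!k+1]!k = x!k+1" using lx by simp
      moreover have "x[l := x!l+1]!k = x!k" using \<open>k \<noteq> l\<close> by simp
      ultimately show False using u by simp
    qed
    then show ?thesis using True ak bl by simp
  next
    case False
    then have h1: "x = y[l := y!l+1]" and h2: "y = x[k := x!k+1]" using e by (auto simp: doubleton_eq_iff)
    have "x!k = y!k"
    proof (cases "k = l")
      case True
      have "x!k = y!k + 1" using h1 True ly by simp
      moreover have "y!k = x!k + 1" using h2 lx by simp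
      ultimately show ?thesis by simp
    next
      case False
      then show ?thesis using h1 by simp
    qed
    moreover have "y!k = x!k + 1" using h2 lx by simp
    ultimately show ?thesis by simp
  qed
qed


definition mvI :: "int list \<Rightarrow> nat \<Rightarrow> int \<Rightarrow> int list" where
  "mvI x k s = x[k := x!k + s]"

lemma mvI_nth: "i < length x \<Longrightarrow> k < length x \<Longrightarrow> mvI x k s ! i = x!i + (if i = k then s else 0)"
  by (auto simp: mvI_def nth_list_update)

lemma mvI_len[simp]: "length (mvI x k s) = length x"
  by (simp add: mvI_def)

lemma mvI_unique:
  assumes "k < length x" "k' < length x" "s = 1 \<or> s = -1" "s' = 1 \<or> s' = -1"
    "mvI x k s = mvI x k' s'"
  shows "k = k' \<and> s = s'"
proof -
  have "mvI x k s ! k = mvI x k' s' ! k" using assms(5) by simp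
  moreover have "mvI x k s ! k' = mvI x k' s' ! k'" using assms(5) by simp
  ultimately show ?thesis using assms(1-4) by (auto simp: mvI_nth split: if_splits)
qed

lemma square:
  assumes n: "length x = n" and k: "k1 < n" "k2 < n" "k3 < n" "k4 < n"
    and s: "s1 = 1 \<or> s1 = -1" "s2 = 1 \<or> s2 = -1" "s3 = 1 \<or> s3 = -1" "s4 = 1 \<or> s4 = -1"
    and eq: "mvI (mvI x k1 s1) k2 s2 = mvI (mvI x k3 s3) k4 s4"
    and ne1: "mvI x k1 s1 \<noteq> mvI x k3 s3"
    and ne2: "mvI (mvI x k1 s1) k2 s2 \<noteq> x"
  shows "k1 = k4 \<and> s1 = s4 \<and> k2 = k3 \<and> s2 = s3 \<and> k1 \<noteq> k2"
proof -
  have F: "\<And>i. i < n \<Longrightarrow> (if i = k1 then s1 else 0) + (if i = k2 then s2 else 0)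
      = (if i = k3 then s3 else 0) + (if i = k4 then s4 else 0)"
  proof -
    fix i assume i: "i < n"
    have "mvI (mvI x k1 s1) k2 s2 ! i = mvI (mvI x k3 s3) k4 s4 ! i" using eq by simp
    then show "?thesis i" using i k n by (simp add: mvI_nth)
  qed
  have n1: "\<not> (k1 = k3 \<and> s1 = s3)" using ne1 by auto
  have n2: "\<not> (k1 = k2 \<and> s1 + s2 = 0)"
  proof
    assume h: "k1 = k2 \<and> s1 + s2 = 0"
    have "mvI (mvI x k1 s1) k2 s2 = x"
      by (rule nth_equalityI) (use h k n in \<open>auto simp: mvI_nth\<close>)
    then show False using ne2 by simp
  qed
  show ?thesis
    using F[OF k(1)] F[OF k(2)] F[OF k(3)] F[OF k(4)] n1 n2 s
    by (auto split: if_splits)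
qed


lemma VQ_iff: "b \<in> grid_V (cube m) \<longleftrightarrow> length b = m \<and> (\<forall>i<m. b!i = 1 \<or> b!i = 2)"
  by (auto simp: grid_V_iff cube_def)

lemma cube_len[simp]: "length (cube m) = m" by (simp add: cube_def)
lemma cube_nth[simp]: "k < m \<Longrightarrow> cube m ! k = 2" by (simp add: cube_def)

lemma gP_cube: "gP (cube m) = {(b,k). b \<in> grid_V (cube m) \<and> k < m \<and> b!k = 1}"
  by (auto simp: gP_def VQ_iff)

lemma EQ_eq: "grid_E (cube m) = (\<lambda>(b,k). {b, b[k := 2]}) ` {(b,k). b \<in> grid_V (cube m) \<and> k < m \<and> b!k = 1}"
  unfolding grid_E_eq gP_cube ep_def by (rule image_cong) (auto simp: numeral_2_eq_2)

lemma finite_gP: "finite (gP ns)"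
proof -
  have "gP ns \<subseteq> grid_V ns \<times> {..<length ns}" by (auto simp: gP_def)
  then show ?thesis using finite_grid_V by (meson finite_SigmaI finite_lessThan finite_subset)
qed

lemma finite_grid_E: "finite (grid_E ns)"
  unfolding grid_E_eq using finite_gP by simp

definition std :: "nat list \<Rightarrow> nat list \<Rightarrow> nat list" where
  "std p b = map (\<lambda>i. p!i + b!i - 1) [0..<length p]"

lemma std_len[simp]: "length (std p b) = length p"
  by (simp add: std_def)

lemma std_nth: "i < length p \<Longrightarrow> std p b ! i = p!i + b!i - 1"
  by (simp add: std_def)

lemma std_upd:
  assumes "b \<in> grid_V (cube (length p))" "j < length p" "b!j = 1"
  shows "std p (b[j := 2]) = (std p b)[j := std p b ! j + 1]"
  by (rule nth_equalityI) (use assms in \<open>auto simp: std_nth VQ_iff nth_list_update\<close>)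

lemma std_in:
  assumes p: "p \<in> grid_V ns" "\<forall>k<length ns. p!k < ns!k" and b: "b \<in> grid_V (cube (length ns))"
  shows "std p b \<in> grid_V ns"
proof -
  have lp: "length p = length ns" using p by (simp add: grid_V_iff)
  have "\<forall>i<length ns. 1 \<le> std p b ! i \<and> std p b ! i \<le> ns ! i"
  proof (intro allI impI)
    fix i assume i: "i < length ns"
    have "1 \<le> p!i" "p!i < ns!i" using p i by (auto simp: grid_V_iff)
    moreover have "b!i = 1 \<or> b!i = 2" using b i by (simp add: VQ_iff)
    ultimately show "1 \<le> std p b ! i \<and> std p b ! i \<le> ns ! i" using i lp by (auto simp: std_nth)
  qed
  then show ?thesis using lp by (simp add: grid_V_iff)
qed

lemma std_inj: "inj_on (std p) (grid_V (cube (length p)))"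
proof (rule inj_onI)
  fix a b assume a: "a \<in> grid_V (cube (length p))" and b: "b \<in> grid_V (cube (length p))"
    and e: "std p a = std p b"
  show "a = b"
  proof (rule nth_equalityI)
    show "length a = length b" using a b by (simp add: VQ_iff)
    fix i assume "i < length a"
    then have i: "i < length p" using a by (simp add: VQ_iff)
    have "std p a ! i = std p b ! i" using e by simp
    moreover have "a!i \<ge> 1" "b!i \<ge> 1" using a b i by (auto simp: VQ_iff)
    ultimately show "a!i = b!i" using i by (simp add: std_nth)
  qed
qed

lemma std_edge:
  assumes p: "p \<in> grid_V ns" "\<forall>k<length ns. p!k < ns!k" and bk: "(b,k) \<in> gP (cube (length ns))"
  shows "std p ` ep (b,k) = ep (std p b, k)" "(std p b, k) \<in> gP ns"
proof -
  have lp: "length p = length ns" using p by (simp add: grid_V_iff)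
  have b: "b \<in> grid_V (cube (length p))" "k < length p" "b!k = 1" using bk lp by (auto simp: gP_cube)
  have "std p (b[k := b!k+1]) = (std p b)[k := std p b ! k + 1]" using std_upd[OF b] b by (simp add: numeral_2_eq_2)
  then show "std p ` ep (b,k) = ep (std p b, k)" by (simp add: ep_def)
  show "(std p b, k) \<in> gP ns"
    using std_in[OF p] b lp p by (auto simp: gP_def std_nth grid_V_iff)
qed

lemma std_emb:
  assumes p: "p \<in> grid_V ns" "\<forall>k<length ns. p!k < ns!k"
  shows "subgraph_embedding (grid_V (cube (length ns))) (grid_E (cube (length ns))) (grid_V ns) (grid_E ns) (std p)"
proof -
  have lp: "length p = length ns" using p by (simp add: grid_V_iff)
  show ?thesis unfolding subgraph_embedding_def
  proof (intro conjI ballI)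
    show "inj_on (std p) (grid_V (cube (length ns)))" using std_inj[of p] lp by simp
    show "std p ` grid_V (cube (length ns)) \<subseteq> grid_V ns" using std_in[OF p] by blast
    fix e assume "e \<in> grid_E (cube (length ns))"
    then obtain bk where bk: "bk \<in> gP (cube (length ns))" "e = ep bk" by (auto simp: grid_E_eq)
    obtain b k where "bk = (b,k)" by (cases bk)
    then show "std p ` e \<in> grid_E ns" using std_edge[OF p, of b k] bk by (auto simp: grid_E_eq)
  qed
qed


lemma adj_mv:
  assumes "{x,y} \<in> grid_E ns"
  shows "\<exists>k<length ns. \<exists>s. (s = 1 \<or> s = -1) \<and> map int y = mvI (map int x) k s"
proof -
  obtain z k where zk: "(z,k) \<in> gP ns" "{x,y} = {z, z[k := z!k+1]}"
    using assms by (auto simp: grid_E_eq ep_def)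
  have k: "k < length ns" "length z = length ns" using zk by (auto simp: gP_def grid_V_iff)
  consider "x = z" "y = z[k := z!k+1]" | "y = z" "x = z[k := z!k+1]"
    using zk(2) by (auto simp: doubleton_eq_iff)
  then show ?thesis
  proof cases
    case 1
    have "map int y = mvI (map int x) k 1" using 1 k by (simp add: mvI_def map_update algebra_simps)
    then show ?thesis using k by blast
  next
    case 2
    have "map int y = mvI (map int x) k (-1)"
      by (rule nth_equalityI) (use 2 k in \<open>auto simp: mvI_def nth_list_update\<close>)
    then show ?thesis using k by blast
  qed
qed

definition bT :: "nat \<Rightarrow> nat set \<Rightarrow> nat list" where
  "bT m T = map (\<lambda>i. if i \<in> T then 2 else 1) [0..<m]"

lemma bT_in: "bT m T \<in> grid_V (cube m)"
  by (auto simp: bT_def VQ_iff)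

lemma bT_nth: "i < m \<Longrightarrow> bT m T ! i = (if i \<in> T then 2 else 1)"
  by (simp add: bT_def)

lemma bT_insert: "l < m \<Longrightarrow> bT m (insert l T) = (bT m T)[l := 2]"
  by (rule nth_equalityI) (auto simp: bT_def nth_list_update)

lemma bT_of: "b \<in> grid_V (cube m) \<Longrightarrow> b = bT m {i. i < m \<and> b!i = 2}"
  by (rule nth_equalityI) (auto simp: bT_def VQ_iff)

definition dl :: "nat list \<Rightarrow> (nat list \<Rightarrow> nat list) \<Rightarrow> nat list \<Rightarrow> nat \<Rightarrow> nat \<times> int" where
  "dl ns phi b j = (SOME ks. fst ks < length ns \<and> (snd ks = 1 \<or> snd ks = -1) \<and>
      map int (phi (b[j:=2])) = mvI (map int (phi b)) (fst ks) (snd ks))"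

lemma cubeV_std:
  assumes "length p = m" "\<forall>i<m. 1 \<le> p!i" "length x = m" "\<forall>i<m. x!i = p!i \<or> x!i = p!i+1"
  shows "\<exists>c\<in>grid_V (cube m). x = std p c"
proof
  let ?c = "map (\<lambda>i. x!i + 1 - p!i) [0..<m]"
  show "?c \<in> grid_V (cube m)" using assms by (auto simp: VQ_iff)
  show "x = std p ?c"
    by (rule nth_equalityI) (use assms in \<open>auto simp: std_nth\<close>)
qed

lemma edge_sub: "e \<in> grid_E ns \<Longrightarrow> e \<subseteq> grid_V ns"
  by (auto simp: grid_E_def)

lemma inj_img: "inj_on f V \<Longrightarrow> \<forall>e\<in>E. e \<subseteq> V \<Longrightarrow> inj_on (\<lambda>e. f ` e) E"
  by (rule inj_onI) (simp add: inj_on_image_eq_iff)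

lemma std_reflect:
  assumes lp: "length p = m" "length ns = m" and c: "c1 \<in> grid_V (cube m)" "c2 \<in> grid_V (cube m)"
    and e: "{std p c1, std p c2} \<in> grid_E ns"
  shows "{c1,c2} \<in> grid_E (cube m)"
proof -
  obtain k s where ks: "k < m" "s = 1 \<or> s = -1" "map int (std p c2) = mvI (map int (std p c1)) k s"
    using adj_mv[OF e] lp by auto
  have lc: "length c1 = m" "length c2 = m" using c by (auto simp: VQ_iff)
  have d: "int (c2!i) = int (c1!i) + (if i = k then s else 0)" if i: "i < m" for i
  proof -
    have "int (std p c2 ! i) = map int (std p c2) ! i" using lp i by simp
    also have "\<dots> = mvI (map int (std p c1)) k s ! i" using ks by simp
    also have "\<dots> = map int (std p c1) ! i + (if i = k then s else 0)"
      by (rule mvI_nth) (use i ks lp in auto)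
    also have "\<dots> = int (std p c1 ! i) + (if i = k then s else 0)" using lp i by simp
    finally have "int (std p c2 ! i) = int (std p c1 ! i) + (if i = k then s else 0)" .
    moreover have "c1!i \<ge> 1" "c2!i \<ge> 1" using c i by (auto simp: VQ_iff)
    ultimately show ?thesis using i lp by (simp add: std_nth)
  qed
  have r1: "c1!k = 1 \<or> c1!k = 2" "c2!k = 1 \<or> c2!k = 2" using c ks by (auto simp: VQ_iff)
  show ?thesis
  proof (cases "s = 1")
    case True
    have "c1!k = 1" using d[OF ks(1)] r1 True by auto
    moreover have "c2 = c1[k := 2]"
    proof (rule nth_equalityI)
      show "length c2 = length (c1[k := 2])" using lc by simp
      fix i assume i: "i < length c2"
      show "c2!i = c1[k := 2]!i" using d[of i] i lc ks(1) True \<open>c1!k = 1\<close> by (cases "i = k") auto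
    qed
    ultimately show ?thesis using c ks lc by (auto simp: EQ_eq)
  next
    case False
    then have s: "s = -1" using ks by simp
    have "c2!k = 1" using d[OF ks(1)] r1 s by auto
    moreover have "c1 = c2[k := 2]"
    proof (rule nth_equalityI)
      show "length c1 = length (c2[k := 2])" using lc by simp
      fix i assume i: "i < length c1"
      show "c1!i = c2[k := 2]!i" using d[of i] i lc ks(1) s \<open>c2!k = 1\<close> by (cases "i = k") auto
    qed
    ultimately have "{c2,c1} \<in> grid_E (cube m)" using c ks lc by (auto simp: EQ_eq)
    then show ?thesis by (simp add: insert_commute)
  qed
qed

context
  fixes ns :: "nat list" and phi :: "nat list \<Rightarrow> nat list"
  assumes emb: "subgraph_embedding (grid_V (cube (length ns))) (grid_E (cube (length ns))) (grid_V ns) (grid_E ns) phi"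
begin

lemma phi_in: "b \<in> grid_V (cube (length ns)) \<Longrightarrow> phi b \<in> grid_V ns"
  using emb by (auto simp: subgraph_embedding_def)

lemma phi_inj: "inj_on phi (grid_V (cube (length ns)))"
  using emb by (auto simp: subgraph_embedding_def)

lemma Phi_len: "b \<in> grid_V (cube (length ns)) \<Longrightarrow> length (map int (phi b)) = length ns"
  using phi_in by (simp add: grid_V_iff)

lemma upd2_in: "b \<in> grid_V (cube m) \<Longrightarrow> b[j := 2] \<in> grid_V (cube m)"
proof -
  assume b: "b \<in> grid_V (cube m)"
  have "\<forall>i<m. b[j := 2] ! i = 1 \<or> b[j := 2] ! i = 2"
  proof (intro allI impI)
    fix i assume "i < m"
    then show "b[j := 2] ! i = 1 \<or> b[j := 2] ! i = 2" using b
      by (cases "i = j") (auto simp: VQ_iff)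
  qed
  then show ?thesis using b by (simp add: VQ_iff)
qed

lemma dl_prop:
  assumes b: "b \<in> grid_V (cube (length ns))" "j < length ns" "b!j = 1"
  shows "fst (dl ns phi b j) < length ns \<and> (snd (dl ns phi b j) = 1 \<or> snd (dl ns phi b j) = -1) \<and>
      map int (phi (b[j:=2])) = mvI (map int (phi b)) (fst (dl ns phi b j)) (snd (dl ns phi b j))"
proof -
  have "{b, b[j:=2]} \<in> grid_E (cube (length ns))" using b by (auto simp: EQ_eq)
  then have "phi ` {b, b[j:=2]} \<in> grid_E ns" using emb by (auto simp: subgraph_embedding_def)
  then have "{phi b, phi (b[j:=2])} \<in> grid_E ns" by simp
  from adj_mv[OF this] obtain k s where "k < length ns" "s = 1 \<or> s = -1"
    "map int (phi (b[j:=2])) = mvI (map int (phi b)) k s" by blast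
  then have "\<exists>ks. fst ks < length ns \<and> (snd ks = 1 \<or> snd ks = -1) \<and>
      map int (phi (b[j:=2])) = mvI (map int (phi b)) (fst ks) (snd ks)"
    by (intro exI[of _ "(k,s)"]) auto
  from someI_ex[OF this] show ?thesis unfolding dl_def .
qed

lemma dl_eq:
  assumes b: "b \<in> grid_V (cube (length ns))" "j < length ns" "b!j = 1"
    and ks: "k < length ns" "s = 1 \<or> s = -1" "map int (phi (b[j:=2])) = mvI (map int (phi b)) k s"
  shows "dl ns phi b j = (k, s)"
proof -
  note d = dl_prop[OF b]
  have "mvI (map int (phi b)) (fst (dl ns phi b j)) (snd (dl ns phi b j)) = mvI (map int (phi b)) k s"
    using d ks by simp
  then have "fst (dl ns phi b j) = k \<and> snd (dl ns phi b j) = s"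
    using mvI_unique[of _ "map int (phi b)"] d ks Phi_len[OF b(1)] by (metis (no_types, lifting))
  then show ?thesis by (simp add: prod_eq_iff)
qed

lemma sq:
  assumes b: "b \<in> grid_V (cube (length ns))" and jl: "j < length ns" "l < length ns" "j \<noteq> l"
    "b!j = 1" "b!l = 1"
  shows "dl ns phi (b[l:=2]) j = dl ns phi b j \<and> fst (dl ns phi b j) \<noteq> fst (dl ns phi b l)"
proof -
  define x where "x = map int (phi b)"
  obtain k1 s1 where d1: "dl ns phi b j = (k1,s1)" by (cases "dl ns phi b j")
  obtain k2 s2 where d2: "dl ns phi (b[j:=2]) l = (k2,s2)" by (cases "dl ns phi (b[j:=2]) l")
  obtain k3 s3 where d3: "dl ns phi b l = (k3,s3)" by (cases "dl ns phi b l")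
  obtain k4 s4 where d4: "dl ns phi (b[l:=2]) j = (k4,s4)" by (cases "dl ns phi (b[l:=2]) j")
  have bj: "b[j:=2] \<in> grid_V (cube (length ns))" "b[l:=2] \<in> grid_V (cube (length ns))"
    using b upd2_in by auto
  note p1 = dl_prop[OF b jl(1) jl(4)] and p3 = dl_prop[OF b jl(2) jl(5)]
  have bjl: "b[j:=2] ! l = 1" "b[l:=2] ! j = 1" using jl by auto
  note p2 = dl_prop[OF bj(1) jl(2) bjl(1)] and p4 = dl_prop[OF bj(2) jl(1) bjl(2)]
  have bjl2: "b[j:=2, l:=2] \<in> grid_V (cube (length ns))" using bj upd2_in by auto
  have sw: "b[j:=2, l:=2] = b[l:=2, j:=2]" using jl(3) by (simp add: list_update_swap)
  have im: "\<And>u v. u \<in> grid_V (cube (length ns)) \<Longrightarrow> v \<in> grid_V (cube (length ns)) \<Longrightarrow>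
      map int (phi u) = map int (phi v) \<Longrightarrow> u = v"
    using phi_inj by (simp add: inj_map_eq_map inj_on_eq_iff)
  have lb: "length b = length ns" using b by (simp add: VQ_iff)
  have ne1: "map int (phi (b[j:=2])) \<noteq> map int (phi (b[l:=2]))"
  proof
    assume "map int (phi (b[j:=2])) = map int (phi (b[l:=2]))"
    then have "b[j:=2] = b[l:=2]" using im bj by blast
    then have "b[j:=2] ! j = b[l:=2] ! j" by simp
    then show False using jl lb by simp
  qed
  have ne2: "map int (phi (b[j:=2, l:=2])) \<noteq> map int (phi b)"
  proof
    assume "map int (phi (b[j:=2, l:=2])) = map int (phi b)"
    then have "b[j:=2, l:=2] = b" using im bjl2 b by blast
    then have "b[j:=2, l:=2] ! j = b ! j" by simp
    then show False using jl lb by simp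
  qed
  have E1: "map int (phi (b[j:=2, l:=2])) = mvI (mvI (map int (phi b)) k1 s1) k2 s2"
    using p1 p2 d1 d2 by simp
  have E2: "map int (phi (b[j:=2, l:=2])) = mvI (mvI (map int (phi b)) k3 s3) k4 s4"
    using p3 p4 d3 d4 sw by simp
  have "k1 = k4 \<and> s1 = s4 \<and> k2 = k3 \<and> s2 = s3 \<and> k1 \<noteq> k2"
  proof (rule square[of "map int (phi b)" "length ns"])
    show "length (map int (phi b)) = length ns" using Phi_len[OF b] .
    show "mvI (mvI (map int (phi b)) k1 s1) k2 s2 = mvI (mvI (map int (phi b)) k3 s3) k4 s4"
      using E1 E2 by simp
    show "mvI (map int (phi b)) k1 s1 \<noteq> mvI (map int (phi b)) k3 s3" using ne1 p1 p3 d1 d3 by simp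
    show "mvI (mvI (map int (phi b)) k1 s1) k2 s2 \<noteq> map int (phi b)" using ne2 E1 by simp
  qed (use p1 p2 p3 p4 d1 d2 d3 d4 in auto)
  then show ?thesis using d1 d3 d4 by simp
qed


lemma prop_aux:
  "finite T \<Longrightarrow> T \<subseteq> {..<length ns} \<Longrightarrow> j < length ns \<Longrightarrow> j \<notin> T \<Longrightarrow>
    dl ns phi (bT (length ns) T) j = dl ns phi (bT (length ns) {}) j"
proof (induction T rule: finite_induct)
  case empty
  then show ?case by simp
next
  case (insert l T)
  have l: "l < length ns" "l \<notin> T" "j \<noteq> l" "T \<subseteq> {..<length ns}" "j \<notin> T" using insert by auto
  have "dl ns phi ((bT (length ns) T)[l:=2]) j = dl ns phi (bT (length ns) T) j"
    using sq[OF bT_in, of j l] l insert.prems(2) by (simp add: bT_nth)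
  then show ?case using insert.IH insert.prems l bT_insert[OF l(1)] by simp
qed

lemma pos:
  "finite T \<Longrightarrow> T \<subseteq> {..<length ns} \<Longrightarrow> \<forall>i<length ns. int (phi (bT (length ns) T) ! i) =
     int (phi (bT (length ns) {}) ! i) + (\<Sum>j\<in>{j\<in>T. fst (dl ns phi (bT (length ns) {}) j) = i}. snd (dl ns phi (bT (length ns) {}) j))"
proof (induction T rule: finite_induct)
  case empty
  then show ?case by simp
next
  case (insert l T)
  let ?m = "length ns"
  let ?ax = "\<lambda>j. fst (dl ns phi (bT ?m {}) j)"
  let ?sg = "\<lambda>j. snd (dl ns phi (bT ?m {}) j)"
  have l: "l < ?m" "l \<notin> T" "T \<subseteq> {..<?m}" using insert by auto
  have dd: "dl ns phi (bT ?m T) l = dl ns phi (bT ?m {}) l"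
    using prop_aux[OF insert(1) l(3) l(1) l(2)] .
  have bl: "bT ?m T ! l = 1" using l by (simp add: bT_nth)
  note dp = dl_prop[OF bT_in l(1) bl]
  have e: "map int (phi (bT ?m (insert l T))) = mvI (map int (phi (bT ?m T))) (?ax l) (?sg l)"
    using dp dd bT_insert[OF l(1)] by simp
  show ?case
  proof (intro allI impI)
    fix i assume i: "i < ?m"
    have lp: "length (map int (phi (bT ?m T))) = ?m" using Phi_len[OF bT_in] .
    have "int (phi (bT ?m (insert l T)) ! i) = map int (phi (bT ?m (insert l T))) ! i"
      using Phi_len[OF bT_in] i by simp
    also have "\<dots> = int (phi (bT ?m T) ! i) + (if i = ?ax l then ?sg l else 0)"
      unfolding e using mvI_nth[of i "map int (phi (bT ?m T))" "?ax l" "?sg l"] lp i dp dd by simp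
    also have "\<dots> = int (phi (bT ?m {}) ! i) + (\<Sum>j\<in>{j\<in>T. ?ax j = i}. ?sg j) + (if i = ?ax l then ?sg l else 0)"
      using insert.IH l i by simp
    also have "\<dots> = int (phi (bT ?m {}) ! i) + (\<Sum>j\<in>{j\<in>insert l T. ?ax j = i}. ?sg j)"
    proof (cases "?ax l = i")
      case True
      have "{j\<in>insert l T. ?ax j = i} = insert l {j\<in>T. ?ax j = i}" using True by auto
      moreover have "finite {j\<in>T. ?ax j = i}" using insert(1) by simp
      ultimately show ?thesis using True l(2) by simp
    next
      case False
      have "{j\<in>insert l T. ?ax j = i} = {j\<in>T. ?ax j = i}" using False by auto
      then show ?thesis using False by simp
    qed
    finally show "int (phi (bT ?m (insert l T)) ! i) = int (phi (bT ?m {}) ! i) + (\<Sum>j\<in>{j\<in>insert l T. ?ax j = i}. ?sg j)" .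
  qed
qed

lemma ax_inj: "inj_on (\<lambda>j. fst (dl ns phi (bT (length ns) {}) j)) {..<length ns}"
proof (rule inj_onI)
  fix j l assume "j \<in> {..<length ns}" "l \<in> {..<length ns}"
    and e: "fst (dl ns phi (bT (length ns) {}) j) = fst (dl ns phi (bT (length ns) {}) l)"
  show "j = l"
  proof (rule ccontr)
    assume "j \<noteq> l"
    then show False using sq[OF bT_in, of j l] e \<open>j \<in> _\<close> \<open>l \<in> _\<close> by (simp add: bT_nth)
  qed
qed

lemma ax_range: "(\<lambda>j. fst (dl ns phi (bT (length ns) {}) j)) ` {..<length ns} = {..<length ns}"
proof (rule endo_inj_surj)
  show "(\<lambda>j. fst (dl ns phi (bT (length ns) {}) j)) ` {..<length ns} \<subseteq> {..<length ns}"
    using dl_prop[OF bT_in] by (auto simp: bT_nth)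
qed (use ax_inj in auto)

lemma char_V:
  "\<exists>p. p \<in> grid_V ns \<and> (\<forall>k<length ns. p!k < ns!k) \<and>
     (\<forall>b\<in>grid_V (cube (length ns)). \<forall>i<length ns. phi b ! i = p!i \<or> phi b ! i = p!i + 1)"
proof -
  let ?m = "length ns"
  let ?b0 = "bT ?m {}"
  let ?ax = "\<lambda>j. fst (dl ns phi ?b0 j)"
  let ?sg = "\<lambda>j. snd (dl ns phi ?b0 j)"
  define jv where "jv = the_inv_into {..<?m} ?ax"
  have jv: "\<And>i. i < ?m \<Longrightarrow> jv i < ?m \<and> ?ax (jv i) = i"
  proof -
    fix i assume i: "i < ?m"
    then have "i \<in> ?ax ` {..<?m}" using ax_range by simp
    then have h: "i \<in> ?ax ` {..<?m}" .
    have "jv i \<in> {..<?m}" unfolding jv_def by (rule the_inv_into_into[OF ax_inj h]) simp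
    moreover have "?ax (jv i) = i" unfolding jv_def by (rule f_the_inv_into_f[OF ax_inj h])
    ultimately show "jv i < ?m \<and> ?ax (jv i) = i" by simp
  qed
  have sgv: "\<And>j. j < ?m \<Longrightarrow> ?sg j = 1 \<or> ?sg j = -1"
    using dl_prop[OF bT_in] by (simp add: bT_nth)
  have val: "\<And>T i. T \<subseteq> {..<?m} \<Longrightarrow> i < ?m \<Longrightarrow>
      int (phi (bT ?m T) ! i) = int (phi ?b0 ! i) + (if jv i \<in> T then ?sg (jv i) else 0)"
  proof -
    fix T i assume T: "T \<subseteq> {..<?m}" and i: "i < ?m"
    have fT: "finite T" using T finite_subset by blast
    have "{j\<in>T. ?ax j = i} = (if jv i \<in> T then {jv i} else {})"
    proof -
      have H: "j = jv i" if "j \<in> T" "?ax j = i" for j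
      proof -
        have "?ax j = ?ax (jv i)" using jv[OF i] that by simp
        moreover have "j \<in> {..<?m}" using T that by blast
        moreover have "jv i \<in> {..<?m}" using jv[OF i] by simp
        ultimately show "j = jv i" by (rule inj_onD[OF ax_inj])
      qed
      have axj: "?ax (jv i) = i" using jv[OF i] by simp
      show ?thesis
      proof (cases "jv i \<in> T")
        case True
        have "{j\<in>T. ?ax j = i} = {jv i}" using H True axj by blast
        then show ?thesis using True by simp
      next
        case False
        have "{j\<in>T. ?ax j = i} = {}"
        proof (rule ccontr)
          assume "{j\<in>T. ?ax j = i} \<noteq> {}"
          then obtain j where "j \<in> T" "?ax j = i" by blast
          then show False using H False by metis
        qed
        then show ?thesis using False by simp
      qed
    qed
    then show "int (phi (bT ?m T) ! i) = int (phi ?b0 ! i) + (if jv i \<in> T then ?sg (jv i) else 0)"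
      using pos[OF fT T] i by simp
  qed
  define p where "p = map (\<lambda>i. if ?sg (jv i) = 1 then phi ?b0 ! i else phi ?b0 ! i - 1) [0..<?m]"
  have key: "\<And>i. i < ?m \<Longrightarrow> 1 \<le> p!i \<and> p!i < ns!i \<and>
     (\<forall>T. T \<subseteq> {..<?m} \<longrightarrow> phi (bT ?m T) ! i = p!i \<or> phi (bT ?m T) ! i = p!i + 1)"
  proof -
    fix i assume i: "i < ?m"
    have A: "1 \<le> phi ?b0 ! i \<and> phi ?b0 ! i \<le> ns ! i" using phi_in[OF bT_in] i by (simp add: grid_V_iff)
    have B: "1 \<le> phi (bT ?m {jv i}) ! i \<and> phi (bT ?m {jv i}) ! i \<le> ns ! i"
      using phi_in[OF bT_in] i by (simp add: grid_V_iff)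
    have vB: "int (phi (bT ?m {jv i}) ! i) = int (phi ?b0 ! i) + ?sg (jv i)"
      using val[of "{jv i}" i] jv[OF i] i by simp
    have pi: "p ! i = (if ?sg (jv i) = 1 then phi ?b0 ! i else phi ?b0 ! i - 1)"
      using i by (simp add: p_def)
    have "\<forall>T. T \<subseteq> {..<?m} \<longrightarrow> phi (bT ?m T) ! i = p!i \<or> phi (bT ?m T) ! i = p!i + 1"
    proof (intro allI impI)
      fix T assume T: "T \<subseteq> {..<?m}"
      have v: "int (phi (bT ?m T) ! i) = int (phi ?b0 ! i) + (if jv i \<in> T then ?sg (jv i) else 0)"
        using val[OF T i] .
      consider (P) "?sg (jv i) = 1" | (N) "?sg (jv i) = -1" using sgv jv[OF i] by blast
      then show "phi (bT ?m T) ! i = p!i \<or> phi (bT ?m T) ! i = p!i + 1"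
      proof cases
        case P
        then have "p ! i = phi ?b0 ! i" using pi by simp
        then show ?thesis using v P by (cases "jv i \<in> T") (simp_all, linarith?)
      next
        case N
        then have "p ! i + 1 = phi ?b0 ! i" using pi A by simp
        then show ?thesis using v N by (cases "jv i \<in> T") (simp_all, linarith?)
      qed
    qed
    moreover have "1 \<le> p!i \<and> p!i < ns!i"
    proof -
      consider (P) "?sg (jv i) = 1" | (N) "?sg (jv i) = -1" using sgv jv[OF i] by blast
      then show ?thesis
      proof cases
        case P
        then have "p ! i = phi ?b0 ! i" using pi by simp
        then show ?thesis using vB P A B by linarith
      next
        case N
        then have "p ! i + 1 = phi ?b0 ! i" using pi A by simp
        then show ?thesis using vB N A B by linarith
      qed
    qed
    ultimately show "1 \<le> p!i \<and> p!i < ns!i \<and>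
     (\<forall>T. T \<subseteq> {..<?m} \<longrightarrow> phi (bT ?m T) ! i = p!i \<or> phi (bT ?m T) ! i = p!i + 1)" by blast
  qed
  have "length p = ?m" by (simp add: p_def)
  moreover have "\<forall>i<?m. 1 \<le> p!i \<and> p!i \<le> ns!i"
  proof (intro allI impI)
    fix i assume "i < ?m"
    from key[OF this] show "1 \<le> p!i \<and> p!i \<le> ns!i" by simp
  qed
  ultimately have "p \<in> grid_V ns" by (simp add: grid_V_iff)
  moreover have "\<forall>k<?m. p!k < ns!k"
  proof (intro allI impI)
    fix i assume "i < ?m"
    from key[OF this] show "p!i < ns!i" by simp
  qed
  moreover have "\<forall>b\<in>grid_V (cube ?m). \<forall>i<?m. phi b ! i = p!i \<or> phi b ! i = p!i + 1"
  proof (intro ballI allI impI)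
    fix b i assume b: "b \<in> grid_V (cube ?m)" and i: "i < ?m"
    define T where "T = {i. i < ?m \<and> b!i = 2}"
    have eqb: "bT ?m T = b" unfolding T_def by (rule sym[OF bT_of[OF b]])
    have "T \<subseteq> {..<?m}" using T_def by auto
    then have "phi (bT ?m T) ! i = p!i \<or> phi (bT ?m T) ! i = p!i + 1" using key[OF i] by blast
    then show "phi b ! i = p!i \<or> phi b ! i = p!i + 1" using eqb by simp
  qed
  ultimately show ?thesis by blast
qed


lemma char_E:
  "\<exists>p. p \<in> grid_V ns \<and> (\<forall>k<length ns. p!k < ns!k) \<and>
     (\<lambda>e. phi ` e) ` grid_E (cube (length ns)) = (\<lambda>e. std p ` e) ` grid_E (cube (length ns))"
proof -
  let ?m = "length ns"
  obtain p where p: "p \<in> grid_V ns" "\<forall>k<?m. p!k < ns!k"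
    and pb: "\<forall>b\<in>grid_V (cube ?m). \<forall>i<?m. phi b ! i = p!i \<or> phi b ! i = p!i + 1"
    using char_V by blast
  have lp: "length p = ?m" and p1: "\<forall>i<?m. 1 \<le> p!i" using p by (auto simp: grid_V_iff)
  have inV: "\<exists>c\<in>grid_V (cube ?m). phi b = std p c" if b: "b \<in> grid_V (cube ?m)" for b
    using cubeV_std[OF lp p1] phi_in[OF b] pb b by (auto simp: grid_V_iff)
  have sub: "(\<lambda>e. phi ` e) ` grid_E (cube ?m) \<subseteq> (\<lambda>e. std p ` e) ` grid_E (cube ?m)"
  proof
    fix f assume "f \<in> (\<lambda>e. phi ` e) ` grid_E (cube ?m)"
    then obtain e where e: "e \<in> grid_E (cube ?m)" "f = phi ` e" by blast
    then obtain b k where bk: "b \<in> grid_V (cube ?m)" "k < ?m" "b!k = 1" "e = {b, b[k:=2]}"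
      by (auto simp: EQ_eq)
    have b2: "b[k:=2] \<in> grid_V (cube ?m)" using upd2_in bk by blast
    obtain c1 where c1: "c1 \<in> grid_V (cube ?m)" "phi b = std p c1" using inV bk by blast
    obtain c2 where c2: "c2 \<in> grid_V (cube ?m)" "phi (b[k:=2]) = std p c2" using inV b2 by blast
    have "phi ` e \<in> grid_E ns" using emb e by (auto simp: subgraph_embedding_def)
    then have "{std p c1, std p c2} \<in> grid_E ns" using bk c1 c2 by simp
    then have "{c1,c2} \<in> grid_E (cube ?m)" using std_reflect[OF lp refl c1(1) c2(1)] by simp
    moreover have "f = std p ` {c1,c2}" using e bk c1 c2 by simp
    ultimately show "f \<in> (\<lambda>e. std p ` e) ` grid_E (cube ?m)" by blast
  qed
  have es: "\<forall>e\<in>grid_E (cube ?m). e \<subseteq> grid_V (cube ?m)" using edge_sub by blast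
  have "card ((\<lambda>e. phi ` e) ` grid_E (cube ?m)) = card (grid_E (cube ?m))"
    by (rule card_image[OF inj_img[OF phi_inj es]])
  also have "\<dots> = card ((\<lambda>e. std p ` e) ` grid_E (cube ?m))"
    using card_image[OF inj_img[OF std_inj[of p] ]] es lp by simp
  finally have "(\<lambda>e. phi ` e) ` grid_E (cube ?m) = (\<lambda>e. std p ` e) ` grid_E (cube ?m)"
    using card_subset_eq[OF _ sub] finite_grid_E by simp
  then show ?thesis using p by blast
qed

end



lemma VQ_lists: "grid_V (cube m) = {xs. set xs \<subseteq> {1,2} \<and> length xs = m}"
  by (auto simp: VQ_iff in_set_conv_nth) (metis insert_iff nth_mem singletonD subsetD)+

lemma card_VQ: "card (grid_V (cube m)) = 2 ^ m"
  unfolding VQ_lists by (simp add: card_lists_length_eq numeral_2_eq_2)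

lemma VQ_nth: "b \<in> grid_V (cube m) \<Longrightarrow> i < m \<Longrightarrow> b!i = 1 \<or> b!i = 2"
  by (simp add: VQ_iff)

lemma VQ_upd: "b \<in> grid_V (cube m) \<Longrightarrow> c = 1 \<or> c = 2 \<Longrightarrow> b[j := c] \<in> grid_V (cube m)"
proof -
  assume b: "b \<in> grid_V (cube m)" and c: "c = 1 \<or> c = 2"
  have "\<forall>i<m. b[j := c] ! i = 1 \<or> b[j := c] ! i = 2"
  proof (intro allI impI)
    fix i assume "i < m"
    then show "b[j := c] ! i = 1 \<or> b[j := c] ! i = 2" using b c
      by (cases "i = j") (auto simp: VQ_iff)
  qed
  then show ?thesis using b by (simp add: VQ_iff)
qed

lemma finite_VQ: "finite (grid_V (cube m))"
  by (rule finite_grid_V)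

lemma flip_sum:
  fixes h :: "nat list \<Rightarrow> nat"
  assumes B: "B \<subseteq> grid_V (cube m)" and j: "j < m"
    and cl: "\<forall>b\<in>B. b!j = 1 \<longrightarrow> b[j:=2] \<in> B" "\<forall>b\<in>B. b!j = 2 \<longrightarrow> b[j:=1] \<in> B"
    and hC: "\<forall>b\<in>B. b!j = 1 \<longrightarrow> h b + h (b[j:=2]) = C"
  shows "(\<Sum>b\<in>B. h b) = card {b\<in>B. b!j = 1} * C"
proof -
  let ?B1 = "{b\<in>B. b!j = 1}" and ?B2 = "{b\<in>B. b!j = 2}"
  have fB: "finite B" using B finite_VQ finite_subset by blast
  have lenB: "\<And>b. b \<in> B \<Longrightarrow> length b = m" using B by (auto simp: VQ_iff)
  have Bj: "\<And>b. b \<in> B \<Longrightarrow> b!j = 1 \<or> b!j = 2" using B j VQ_nth by blast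
  have BU: "B = ?B1 \<union> ?B2" using Bj by auto
  have inj: "inj_on (\<lambda>b. b[j:=2]) ?B1"
  proof (rule inj_onI)
    fix a b assume a: "a \<in> ?B1" and b: "b \<in> ?B1" and e: "a[j:=2] = b[j:=2]"
    have "a[j:=2, j:=1] = b[j:=2, j:=1]" using e by simp
    moreover have "a[j:=2, j:=1] = a"
    proof -
      have "a!j = 1" using a by simp
      then show ?thesis by (metis list_update_id list_update_overwrite)
    qed
    moreover have "b[j:=2, j:=1] = b"
    proof -
      have "b!j = 1" using b by simp
      then show ?thesis by (metis list_update_id list_update_overwrite)
    qed
    ultimately show "a = b" by simp
  qed
  have img: "(\<lambda>b. b[j:=2]) ` ?B1 = ?B2"
  proof
    show "(\<lambda>b. b[j:=2]) ` ?B1 \<subseteq> ?B2" using cl(1) lenB j by auto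
    show "?B2 \<subseteq> (\<lambda>b. b[j:=2]) ` ?B1"
    proof
      fix c assume c: "c \<in> ?B2"
      have "c[j:=1] \<in> ?B1" using c cl(2) lenB j by auto
      moreover have "c = c[j:=1, j:=2]"
      proof -
        have "c!j = 2" using c by simp
        then show ?thesis by (metis list_update_id list_update_overwrite)
      qed
      ultimately show "c \<in> (\<lambda>b. b[j:=2]) ` ?B1" by blast
    qed
  qed
  have "(\<Sum>b\<in>B. h b) = (\<Sum>b\<in>?B1. h b) + (\<Sum>b\<in>?B2. h b)"
    by (subst BU, rule sum.union_disjoint) (use fB in auto)
  also have "(\<Sum>b\<in>?B2. h b) = (\<Sum>b\<in>?B1. h (b[j:=2]))"
    unfolding img[symmetric] by (rule sum.reindex[OF inj, unfolded comp_def])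
  also have "(\<Sum>b\<in>?B1. h b) + (\<Sum>b\<in>?B1. h (b[j:=2])) = (\<Sum>b\<in>?B1. C)"
    unfolding sum.distrib[symmetric] by (rule sum.cong) (use hC in auto)
  also have "\<dots> = card ?B1 * C" by simp
  finally show ?thesis .
qed

lemma card_half:
  assumes B: "B \<subseteq> grid_V (cube m)" and j: "j < m"
    and cl: "\<forall>b\<in>B. b!j = 1 \<longrightarrow> b[j:=2] \<in> B" "\<forall>b\<in>B. b!j = 2 \<longrightarrow> b[j:=1] \<in> B"
  shows "card B = 2 * card {b\<in>B. b!j = 1}"
  using flip_sum[OF B j cl, of "\<lambda>_. 1" 2] by simp

lemma card_VQ1: "j < m \<Longrightarrow> card {b\<in>grid_V (cube m). b!j = 1} = 2 ^ (m - 1)"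
proof -
  assume j: "j < m"
  have "card (grid_V (cube m)) = 2 * card {b\<in>grid_V (cube m). b!j = 1}"
    by (rule card_half[OF _ j]) (auto intro: VQ_upd)
  moreover obtain k where "m = Suc k" using j by (cases m) auto
  ultimately show ?thesis using card_VQ[of m] by simp
qed

lemma card_VQ2: "j < m \<Longrightarrow> l < m \<Longrightarrow> j \<noteq> l \<Longrightarrow>
    card {b\<in>{b\<in>grid_V (cube m). b!l = 1}. b!j = 1} = 2 ^ (m - 2)"
proof -
  assume j: "j < m" and l: "l < m" and jl: "j \<noteq> l"
  have "card {b\<in>grid_V (cube m). b!l = 1} = 2 * card {b\<in>{b\<in>grid_V (cube m). b!l = 1}. b!j = 1}"
    by (rule card_half[OF _ j]) (use jl in \<open>auto intro: VQ_upd\<close>)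
  moreover have "m - 1 = Suc (m - 2)" using j l jl by linarith
  ultimately show ?thesis using card_VQ1[OF l] by simp
qed

lemma sum_alt: "(\<Sum>j<2*k. if odd (j+1) then X else Y) = k*(X+(Y::nat))"
proof (induction k)
  case 0
  then show ?case by simp
next
  case (Suc k)
  have "2 * Suc k = Suc (Suc (2*k))" by simp
  then show ?case using Suc by simp
qed

lemma std_snoc: "length p = length b \<Longrightarrow> std (p @ [a]) (b @ [c]) = std p b @ [a + c - 1]"
  by (rule nth_equalityI) (auto simp: std_nth nth_append)

lemma sl_upd0: "xs \<noteq> [] \<Longrightarrow> sum_list (xs[0 := xs!0 + 1]) = sum_list xs + (1::nat)"
  by (cases xs) auto

lemma sum_std_flip:
  assumes "b \<in> grid_V (cube (length p))" "0 < length p" "b!0 = 1" "0 < r"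
  shows "sum_list (take r (std p (b[0:=2]))) = sum_list (take r (std p b)) + 1"
proof -
  have "std p (b[0:=2]) = (std p b)[0 := std p b ! 0 + 1]" using std_upd[OF assms(1,2,3)] .
  then have "take r (std p (b[0:=2])) = (take r (std p b))[0 := take r (std p b) ! 0 + 1]"
    using assms by (simp add: take_update_swap)
  moreover have "take r (std p b) \<noteq> []"
  proof -
    have "length (take r (std p b)) > 0" using assms by (simp only: length_take std_len)
    then show ?thesis by (metis less_irrefl list.size(3))
  qed
  ultimately show ?thesis using sl_upd0[of "take r (std p b)"] by simp
qed

lemma sum_std_V:
  "(\<Sum>v\<in>std p ` grid_V (cube (length p)). F v) = (\<Sum>b\<in>grid_V (cube (length p)). F (std p b))"
  by (rule sum.reindex[OF std_inj, unfolded comp_def])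

lemma sum_std_E:
  assumes p: "p \<in> grid_V ns" "\<forall>k<length ns. p!k < ns!k"
  shows "(\<Sum>e\<in>(\<lambda>e. std p ` e) ` grid_E (cube (length ns)). F e)
       = (\<Sum>bk\<in>gP (cube (length ns)). F (ep (std p (fst bk), snd bk)))"
proof -
  let ?q = "\<lambda>bk. (std p (fst bk), snd bk)"
  have lp: "length p = length ns" using p by (simp add: grid_V_iff)
  have img: "(\<lambda>e. std p ` e) ` grid_E (cube (length ns)) = (\<lambda>bk. ep (?q bk)) ` gP (cube (length ns))"
  proof -
    have "(\<lambda>e. std p ` e) ` grid_E (cube (length ns)) = (\<lambda>bk. std p ` ep bk) ` gP (cube (length ns))"
      unfolding grid_E_eq by (simp add: image_image)
    also have "\<dots> = (\<lambda>bk. ep (?q bk)) ` gP (cube (length ns))"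
    proof (rule image_cong[OF refl])
      fix bk assume "bk \<in> gP (cube (length ns))"
      then show "std p ` ep bk = ep (?q bk)" using std_edge(1)[OF p, of "fst bk" "snd bk"] by simp
    qed
    finally show ?thesis .
  qed
  have inj1: "inj_on ?q (gP (cube (length ns)))"
  proof (rule inj_onI)
    fix a b assume a: "a \<in> gP (cube (length ns))" and b: "b \<in> gP (cube (length ns))" and e: "?q a = ?q b"
    have "fst a \<in> grid_V (cube (length p))" "fst b \<in> grid_V (cube (length p))"
      using a b lp by (auto simp: gP_def)
    then have "fst a = fst b" using e std_inj[of p] by (auto simp: inj_on_def)
    then show "a = b" using e by (simp add: prod_eq_iff)
  qed
  have into: "?q ` gP (cube (length ns)) \<subseteq> gP ns"
    using std_edge(2)[OF p] by auto
  have inj: "inj_on (\<lambda>bk. ep (?q bk)) (gP (cube (length ns)))"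
    using comp_inj_on[OF inj1 inj_on_subset[OF inj_ep into]] by (simp add: comp_def)
  show ?thesis unfolding img by (rule sum.reindex[OF inj, unfolded comp_def])
qed

lemma VQ_snoc: "b @ [c] \<in> grid_V (cube (Suc m)) \<longleftrightarrow> b \<in> grid_V (cube m) \<and> (c = 1 \<or> c = 2)"
  by (auto simp: VQ_iff nth_append)

lemma gP_split:
  fixes G :: "nat list \<times> nat \<Rightarrow> nat"
  shows "(\<Sum>bk\<in>gP (cube (Suc m)). G bk) =
    (\<Sum>b\<in>grid_V (cube m). G (b @ [1], m)) +
    (\<Sum>bk\<in>gP (cube m). G (fst bk @ [1], snd bk) + G (fst bk @ [2], snd bk))"
proof -
  let ?A1 = "(\<lambda>b. (b @ [1::nat], m)) ` grid_V (cube m)"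
  let ?f2 = "\<lambda>bk. (fst bk @ [1::nat], snd bk)"
  let ?f3 = "\<lambda>bk. (fst bk @ [2::nat], snd bk)"
  let ?A2 = "?f2 ` gP (cube m)"
  let ?A3 = "?f3 ` gP (cube m)"
  have fin: "finite (gP (cube m))" "finite (grid_V (cube m))" using finite_gP finite_grid_V by auto
  have lenm: "\<And>b. b \<in> grid_V (cube m) \<Longrightarrow> length b = m" by (simp add: VQ_iff)
  have split: "gP (cube (Suc m)) = ?A1 \<union> ?A2 \<union> ?A3"
  proof
    show "gP (cube (Suc m)) \<subseteq> ?A1 \<union> ?A2 \<union> ?A3"
    proof
      fix bk assume bk: "bk \<in> gP (cube (Suc m))"
      obtain b k where bkd: "bk = (b,k)" by (cases bk)
      have b: "b \<in> grid_V (cube (Suc m))" "k < Suc m" "b!k = 1" using bk bkd by (auto simp: gP_cube)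
      have lb: "length b = Suc m" using b by (simp add: VQ_iff)
      then have bb: "b = butlast b @ [last b]" by (metis append_butlast_last_id list.size(3) nat.distinct(1))
      have lbb: "length (butlast b) = m" using lb by simp
      have bv: "butlast b \<in> grid_V (cube m)" "last b = 1 \<or> last b = 2"
        using b(1) bb VQ_snoc[of "butlast b" "last b" m] by auto
      show "bk \<in> ?A1 \<union> ?A2 \<union> ?A3"
      proof (cases "k = m")
        case True
        have "last b = 1" using b(3) True bb lbb by (metis nth_append_length)
        then have "bk = (butlast b @ [1], m)" using bkd bb True by simp
        then show ?thesis using bv by blast
      next
        case False
        then have km: "k < m" using b by simp
        have "butlast b ! k = 1" using b(3) bb km lbb by (metis nth_append)
        then have "(butlast b, k) \<in> gP (cube m)" using bv km by (simp add: gP_cube)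
        moreover have "bk = ?f2 (butlast b, k) \<or> bk = ?f3 (butlast b, k)" using bv(2) bb bkd by auto
        ultimately show ?thesis by blast
      qed
    qed
    show "?A1 \<union> ?A2 \<union> ?A3 \<subseteq> gP (cube (Suc m))"
      using lenm by (auto simp: gP_cube VQ_snoc nth_append)
  qed
  have inj1: "inj_on (\<lambda>b. (b @ [1::nat], m)) (grid_V (cube m))" by (rule inj_onI) simp
  have inj2: "inj_on ?f2 (gP (cube m))" by (rule inj_onI) (simp add: prod_eq_iff)
  have inj3: "inj_on ?f3 (gP (cube m))" by (rule inj_onI) (simp add: prod_eq_iff)
  have d12: "?A1 \<inter> ?A2 = {}" by (auto simp: gP_cube)
  have d3: "(?A1 \<union> ?A2) \<inter> ?A3 = {}" by auto
  have "(\<Sum>bk\<in>gP (cube (Suc m)). G bk) = (\<Sum>bk\<in>?A1. G bk) + (\<Sum>bk\<in>?A2. G bk) + (\<Sum>bk\<in>?A3. G bk)"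
    unfolding split using fin d12 d3 by (simp add: sum.union_disjoint)
  also have "(\<Sum>bk\<in>?A1. G bk) = (\<Sum>b\<in>grid_V (cube m). G (b @ [1], m))"
    by (rule sum.reindex[OF inj1, unfolded comp_def])
  also have "(\<Sum>bk\<in>?A2. G bk) = (\<Sum>bk\<in>gP (cube m). G (fst bk @ [1], snd bk))"
    by (rule sum.reindex[OF inj2, unfolded comp_def])
  also have "(\<Sum>bk\<in>?A3. G bk) = (\<Sum>bk\<in>gP (cube m). G (fst bk @ [2], snd bk))"
    by (rule sum.reindex[OF inj3, unfolded comp_def])
  finally show ?thesis by (simp add: sum.distrib)
qed


lemma grid_V_snoc: "x @ [t] \<in> grid_V (ns @ [n]) \<longleftrightarrow> x \<in> grid_V ns \<and> 1 \<le> t \<and> t \<le> n"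
proof
  assume h: "x @ [t] \<in> grid_V (ns @ [n])"
  then have l: "length x = length ns" by (simp add: grid_V_iff)
  have H: "\<And>i. i < Suc (length ns) \<Longrightarrow> 1 \<le> (x@[t])!i \<and> (x@[t])!i \<le> (ns@[n])!i"
    using h by (simp add: grid_V_iff)
  have "\<forall>i<length ns. 1 \<le> x!i \<and> x!i \<le> ns!i"
  proof (intro allI impI)
    fix i assume i: "i < length ns"
    then show "1 \<le> x!i \<and> x!i \<le> ns!i" using H[of i] l by (simp add: nth_append)
  qed
  moreover have "1 \<le> t \<and> t \<le> n" using H[of "length ns"] l by (simp add: nth_append)
  ultimately show "x \<in> grid_V ns \<and> 1 \<le> t \<and> t \<le> n" using l by (simp add: grid_V_iff)
next
  assume h: "x \<in> grid_V ns \<and> 1 \<le> t \<and> t \<le> n"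
  then have l: "length x = length ns" by (simp add: grid_V_iff)
  have "\<forall>i<length (ns @ [n]). 1 \<le> (x @ [t])!i \<and> (x @ [t])!i \<le> (ns @ [n])!i"
  proof (intro allI impI)
    fix i assume i: "i < length (ns @ [n])"
    show "1 \<le> (x @ [t])!i \<and> (x @ [t])!i \<le> (ns @ [n])!i"
    proof (cases "i < length ns")
      case True
      then show ?thesis using h l by (auto simp: grid_V_iff nth_append)
    next
      case False
      then have "i = length ns" using i by simp
      then show ?thesis using h l by (simp add: nth_append)
    qed
  qed
  then show "x @ [t] \<in> grid_V (ns @ [n])" using l by (simp add: grid_V_iff)
qed

lemma gP_sum_k:
  fixes F :: "nat list \<Rightarrow> nat \<Rightarrow> nat"
  shows "(\<Sum>bk\<in>gP (cube m). F (fst bk) (snd bk)) = (\<Sum>k<m. \<Sum>b\<in>{b\<in>grid_V (cube m). b!k = 1}. F b k)"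
proof -
  have e: "gP (cube m) = (\<lambda>kb. (snd kb, fst kb)) ` (SIGMA k:{..<m}. {b\<in>grid_V (cube m). b!k = 1})"
    by (auto simp: gP_cube image_iff)
  have inj: "inj_on (\<lambda>kb. (snd kb, fst kb)) (SIGMA k:{..<m}. {b\<in>grid_V (cube m). b!k = 1})"
    by (rule inj_onI) (auto simp: prod_eq_iff)
  have "(\<Sum>bk\<in>gP (cube m). F (fst bk) (snd bk)) = (\<Sum>kb\<in>(SIGMA k:{..<m}. {b\<in>grid_V (cube m). b!k = 1}). F (snd kb) (fst kb))"
    unfolding e by (subst sum.reindex[OF inj]) (simp add: comp_def)
  also have "\<dots> = (\<Sum>(k,b)\<in>(SIGMA k:{..<m}. {b\<in>grid_V (cube m). b!k = 1}). F b k)"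
    by (simp add: split_def)
  also have "\<dots> = (\<Sum>k<m. \<Sum>b\<in>{b\<in>grid_V (cube m). b!k = 1}. F b k)"
    by (rule sum.Sigma[symmetric]) (auto simp: finite_grid_V)
  finally show ?thesis .
qed


lemma divmod_uniq:
  fixes u v u' v' N :: nat
  assumes "u < N" "u' < N" "u + v * N = u' + v' * N"
  shows "u = u' \<and> v = v'"
proof -
  have "(u + v * N) mod N = u" using assms(1) by simp
  moreover have "(u' + v' * N) mod N = u'" using assms(2) by simp
  ultimately have uu: "u = u'" using assms(3) by simp
  then have "v * N = v' * N" using assms(3) by simp
  then show ?thesis using uu assms(1) by simp
qed

lemma bij_pair:
  fixes f :: "'a \<Rightarrow> nat" and h :: "'a \<Rightarrow> 'b \<Rightarrow> nat"
  assumes f: "bij_betw f A {1..N}" and h: "\<And>a. a \<in> A \<Longrightarrow> bij_betw (h a) B {0..<K}"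
  shows "bij_betw (\<lambda>ab. c + f (fst ab) + h (fst ab) (snd ab) * N) (A \<times> B) {c+1..c+K*N}"
proof -
  let ?F = "\<lambda>ab. c + f (fst ab) + h (fst ab) (snd ab) * N"
  have fA: "finite A" using f bij_betw_finite by blast
  have fr: "\<And>a. a \<in> A \<Longrightarrow> 1 \<le> f a \<and> f a \<le> N" using f by (auto simp: bij_betw_def)
  have hr: "h a b < K" if ab: "a \<in> A" "b \<in> B" for a b
  proof -
    have "h a b \<in> h a ` B" using ab(2) by blast
    then show "h a b < K" using h[OF ab(1)] by (simp add: bij_betw_def)
  qed
  have cA: "card A = N" using bij_betw_same_card[OF f] by simp
  have inj: "inj_on ?F (A \<times> B)"
  proof (rule inj_onI)
    fix x y assume x: "x \<in> A \<times> B" and y: "y \<in> A \<times> B" and e: "?F x = ?F y"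
    obtain a b where xab: "x = (a,b)" by (cases x)
    obtain a' b' where yab: "y = (a',b')" by (cases y)
    have ab: "a \<in> A" "b \<in> B" "a' \<in> A" "b' \<in> B" using x y xab yab by auto
    have e1: "c + f a + h a b * N = c + f a' + h a' b' * N" using e xab yab by simp
    have r1: "1 \<le> f a" "f a \<le> N" using fr[OF ab(1)] by auto
    have r2: "1 \<le> f a'" "f a' \<le> N" using fr[OF ab(3)] by auto
    have e2: "(f a - 1) + h a b * N = (f a' - 1) + h a' b' * N" using e1 r1 r2 by linarith
    have l1: "f a - 1 < N" using r1 by linarith
    have l2: "f a' - 1 < N" using r2 by linarith
    have uv: "f a - 1 = f a' - 1 \<and> h a b = h a' b'" using divmod_uniq[OF l1 l2 e2] .
    have "f a = f a'" using uv r1 r2 by linarith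
    then have aa: "a = a'" using inj_onD[OF bij_betw_imp_inj_on[OF f] _ ab(1) ab(3)] by blast
    then have "h a b = h a b'" using uv by simp
    then have "b = b'" using inj_onD[OF bij_betw_imp_inj_on[OF h[OF ab(1)]] _ ab(2) ab(4)] by blast
    then show "x = y" using aa xab yab by simp
  qed
  have sub: "?F ` (A \<times> B) \<subseteq> {c+1..c+K*N}"
  proof
    fix z assume "z \<in> ?F ` (A \<times> B)"
    then obtain a b where ab: "a \<in> A" "b \<in> B" "z = ?F (a,b)" by auto
    have "h a b + 1 \<le> K" using hr[OF ab(1,2)] by simp
    then have m1: "(h a b + 1) * N \<le> K * N" by (rule mult_right_mono) simp
    have m2: "(h a b + 1) * N = h a b * N + N" by simp
    have r: "1 \<le> f a" "f a \<le> N" using fr[OF ab(1)] by auto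
    have "z = c + f a + h a b * N" using ab(3) by simp
    then show "z \<in> {c+1..c+K*N}" using m1 m2 r by simp
  qed
  have card: "card (A \<times> B) = K * N"
  proof (cases "A = {}")
    case True
    then show ?thesis using cA by simp
  next
    case False
    then obtain a where a: "a \<in> A" by blast
    have "card B = K" using bij_betw_same_card[OF h[OF a]] by simp
    then show ?thesis using cA by (simp add: card_cartesian_product)
  qed
  have "?F ` (A \<times> B) = {c+1..c+K*N}"
    by (rule card_subset_eq) (use sub card card_image[OF inj] in auto)
  then show ?thesis using inj by (simp add: bij_betw_def)
qed

lemma bij_t1: "bij_betw (\<lambda>t. t - 1) {1..K} {0..<(K::nat)}"
  by (rule bij_betw_imageI) (auto simp: inj_on_def image_iff intro!: bexI[of _ "Suc _"])

lemma bij_tK: "bij_betw (\<lambda>t. K - t) {1..K} {0..<(K::nat)}"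
proof (rule bij_betw_imageI)
  show "inj_on (\<lambda>t. K - t) {1..K}" by (auto simp: inj_on_def)
  show "(\<lambda>t. K - t) ` {1..K} = {0..<K}"
  proof
    show "(\<lambda>t. K - t) ` {1..K} \<subseteq> {0..<K}" by auto
    show "{0..<K} \<subseteq> (\<lambda>t. K - t) ` {1..K}"
    proof
      fix x assume "x \<in> {0..<K}"
      then have "K - x \<in> {1..K}" "x = K - (K - x)" by auto
      then show "x \<in> (\<lambda>t. K - t) ` {1..K}" by blast
    qed
  qed
qed

lemma bij_tif: "bij_betw (\<lambda>t. if P then t - 1 else K - t) {1..K} {0..<(K::nat)}"
  using bij_t1 bij_tK by (cases P) auto



theorem lemma6:
  fixes ns :: "nat list" and d N M S S' :: nat
    and ft :: "nat list \<Rightarrow> nat" and gt :: "nat list set \<Rightarrow> nat"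
    and g :: "nat list set \<Rightarrow> nat"
  assumes hd: "length ns = d" and d3: "d \<ge> 3"
    and hdec: "\<forall>i j. i \<le> j \<and> j < d \<longrightarrow> ns ! j \<le> ns ! i"
    and h2: "\<forall>i<d. ns ! i \<ge> 2"
    and hN: "N = card (grid_V (butlast ns))"
    and hM: "M = card (grid_E (butlast ns))"
    and hf: "magic_vertex_labeling (grid_V (butlast ns)) (grid_E (butlast ns))
               (grid_V (cube (d - 1))) (grid_E (cube (d - 1))) ft S"
    and hg: "magic_edge_labeling (grid_V (butlast ns)) (grid_E (butlast ns))
               (grid_V (cube (d - 1))) (grid_E (cube (d - 1))) gt S'"
    and hdef: "\<forall>x\<in>grid_V ns. \<forall>i\<in>{1..d}. add_unit x i \<in> grid_V ns \<longrightarrow>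
       (let y = add_unit x i; x' = take (d - 1) x; y' = take (d - 1) y;
            nd = ns ! (d - 1); xd = x ! (d - 1) in
        g {x, y} =
          (if i = d then
             (if odd (sum_list (take (d - 1) x)) then ft x' + nd * M + (xd - 1) * N
              else ft x' + nd * M + (nd - 1 - xd) * N)
           else if (odd d \<and> i \<le> d - 1) \<or> (even d \<and> i \<le> d - 2) then
             (if odd i then gt {x', y'} + (xd - 1) * M
              else gt {x', y'} + (nd - xd) * M)
           else
             (if odd (sum_list (take (d - 2) x)) then gt {x', y'} + (xd - 1) * M
              else gt {x', y'} + (nd - xd) * M)))"
  shows "magic_edge_labeling (grid_V ns) (grid_E ns) (grid_V (cube d)) (grid_E (cube d)) g
     (S + 2 * S' + 2 ^ (d - 2) * (ns ! (d - 1) - 2) * N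
        + 2 ^ (d - 2) * (2 * ns ! (d - 1) + (d - 1) * (ns ! (d - 1) - 1)) * M)"
proof -
  define m where "m = d - 1"
  have dm: "d = Suc m" using d3 m_def by simp
  have dm1: "d - 1 = m" using m_def by simp
  define nd where "nd = ns ! (d - 1)"
  define ns' where "ns' = butlast ns"
  have lns': "length ns' = m" using hd by (simp add: ns'_def m_def)
  have nsd: "ns = ns' @ [nd]"
  proof -
    have "ns \<noteq> []" using hd dm by auto
    then have "ns = butlast ns @ [last ns]" by simp
    moreover have "last ns = ns ! (d - 1)" using hd dm \<open>ns \<noteq> []\<close> by (simp add: last_conv_nth)
    ultimately show ?thesis by (simp add: ns'_def nd_def)
  qed
  have nd2: "nd \<ge> 2" using h2 dm nd_def by simp
  have m2: "m \<ge> 2" using d3 dm by simp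
  have gform: "g (ep (x' @ [t], k)) =
     (if k = m then
        (if odd (sum_list x') then ft x' + nd * M + (t - 1) * N else ft x' + nd * M + (nd - 1 - t) * N)
      else if (odd d \<and> k + 1 \<le> d - 1) \<or> (even d \<and> k + 1 \<le> d - 2) then
        (if odd (k + 1) then gt (ep (x', k)) + (t - 1) * M else gt (ep (x', k)) + (nd - t) * M)
      else
        (if odd (sum_list (take (m - 1) x')) then gt (ep (x', k)) + (t - 1) * M
         else gt (ep (x', k)) + (nd - t) * M))"
    if x': "x' \<in> grid_V ns'" and t: "1 \<le> t" "t \<le> nd" and k: "k < d" and kk: "(x' @ [t]) ! k < ns ! k"
    for x' t k
  proof -
    let ?x = "x' @ [t]"
    have lx': "length x' = m" using x' lns' by (simp add: grid_V_iff)
    have xin: "?x \<in> grid_V ns" using x' t nsd grid_V_snoc by simp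
    have gp: "(?x, k) \<in> gP ns" using xin k kk hd by (simp add: gP_def)
    have au: "add_unit ?x (k+1) = ?x[k := ?x!k + 1]" by (simp add: add_unit_def)
    have yin: "add_unit ?x (k+1) \<in> grid_V ns" using upd_in_grid[OF gp] au by simp
    have iin: "k + 1 \<in> {1..d}" using k by simp
    note H = hdef[rule_format, OF xin iin yin]
    have ep: "ep (?x, k) = {?x, add_unit ?x (k+1)}" using au by (simp add: ep_def)
    have tx: "take (d - 1) ?x = x'" using lx' dm1 by simp
    have xd: "?x ! (d - 1) = t" using lx' dm1 by (simp add: nth_append)
    have t2: "take (d - 2) ?x = take (m - 1) x'" using lx' dm by simp
    show ?thesis
    proof (cases "k = m")
      case True
      have ty: "take (d - 1) (add_unit ?x (k+1)) = x'" using au True lx' dm1 by simp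
      have kd: "k + 1 = d" using True dm by simp
      have ndd: "ns ! (d - 1) = nd" by (simp add: nd_def)
      note H' = H[unfolded Let_def tx ty xd ndd]
      show ?thesis using H' kd True lx' unfolding ep by simp
    next
      case False
      then have km: "k < m" using k dm by simp
      have ty: "take (d - 1) (add_unit ?x (k+1)) = x'[k := x'!k + 1]"
        using au km lx' dm1 by (simp add: list_update_append nth_append)
      have epx: "ep (x', k) = {x', x'[k := x'!k + 1]}" by (simp add: ep_def)
      have kd: "k + 1 \<noteq> d" using km dm by simp
      have ndd: "ns ! (d - 1) = nd" by (simp add: nd_def)
      note H' = H[unfolded Let_def tx ty xd ndd t2]
      show ?thesis using H' kd False unfolding ep epx by simp
    qed
  qed
  have ndd: "ns ! (d - 1) = nd" by (simp add: nd_def)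
  have nsm: "ns ! m = nd" using nsd lns' by (simp add: nth_append)
  have ns'k: "ns ! k = ns' ! k" if "k < m" for k using nsd lns' that by (simp add: nth_append)
  have cm: "cube (d - 1) = cube (length ns')" using lns' dm1 by simp
  have ftbij: "bij_betw ft (grid_V ns') {1..N}" using hf hN by (simp add: magic_vertex_labeling_def ns'_def)
  have gtbij: "bij_betw gt (grid_E ns') {1..M}" using hg hM by (simp add: magic_edge_labeling_def ns'_def)
  have ftS: "(\<Sum>b\<in>grid_V (cube m). ft (std p' b)) = S"
    if p': "p' \<in> grid_V ns'" "\<forall>k<length ns'. p'!k < ns'!k" for p'
  proof -
    have lp': "length p' = m" using p' lns' by (simp add: grid_V_iff)
    have "(\<Sum>v\<in>std p' ` grid_V (cube (length ns')). ft v) = S"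
      using hf std_emb[OF p'] unfolding magic_vertex_labeling_def cm ns'_def[symmetric] by blast
    then show ?thesis using sum_std_V[of ft p'] lp' lns' by simp
  qed
  have gtS: "(\<Sum>bk\<in>gP (cube m). gt (ep (std p' (fst bk), snd bk))) = S'"
    if p': "p' \<in> grid_V ns'" "\<forall>k<length ns'. p'!k < ns'!k" for p'
  proof -
    have "(\<Sum>e\<in>(\<lambda>e. std p' ` e) ` grid_E (cube (length ns')). gt e) = S'"
      using hg std_emb[OF p'] unfolding magic_edge_labeling_def cm ns'_def[symmetric] by blast
    then show ?thesis using sum_std_E[OF p', of gt] lns' by simp
  qed
  define C where "C = S + 2 * S' + 2 ^ (d - 2) * (ns ! (d - 1) - 2) * N
        + 2 ^ (d - 2) * (2 * ns ! (d - 1) + (d - 1) * (ns ! (d - 1) - 1)) * M"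
  have magic: "(\<Sum>e\<in>(\<lambda>e. phi ` e) ` grid_E (cube d). g e) = C"
    if emb: "subgraph_embedding (grid_V (cube d)) (grid_E (cube d)) (grid_V ns) (grid_E ns) phi" for phi
  proof -
    have emb': "subgraph_embedding (grid_V (cube (length ns))) (grid_E (cube (length ns))) (grid_V ns) (grid_E ns) phi"
      using emb hd by simp
    obtain p where p: "p \<in> grid_V ns" "\<forall>k<length ns. p!k < ns!k"
      and img: "(\<lambda>e. phi ` e) ` grid_E (cube (length ns)) = (\<lambda>e. std p ` e) ` grid_E (cube (length ns))"
      using char_E[OF emb'] by blast
    define p' where "p' = butlast p"
    define pd where "pd = p ! m"
    have lp: "length p = Suc m" using p hd dm by (simp add: grid_V_iff)
    have psd: "p = p' @ [pd]"
    proof -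
      have "p \<noteq> []" using lp by auto
      then have "p = butlast p @ [last p]" by simp
      moreover have "last p = p ! m" using lp \<open>p \<noteq> []\<close> by (simp add: last_conv_nth)
      ultimately show ?thesis by (simp add: p'_def pd_def)
    qed
    have lp': "length p' = m" using lp by (simp add: p'_def)
    have p'V: "p' \<in> grid_V ns'" and pd1: "1 \<le> pd" "pd \<le> nd"
      using p(1) unfolding psd nsd grid_V_snoc by auto
    have pdn: "pd < nd" using p(2)[rule_format, of m] hd dm nsm pd_def by simp
    have p'lt: "\<forall>k<length ns'. p'!k < ns'!k"
    proof (intro allI impI)
      fix k assume "k < length ns'"
      then have k: "k < m" using lns' by simp
      have "p!k < ns!k" using p(2)[rule_format, of k] k hd dm by simp
      moreover have "p!k = p'!k" using k lp' psd by (simp add: nth_append)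
      ultimately show "p'!k < ns'!k" using ns'k[OF k] by simp
    qed
    have sum0: "(\<Sum>e\<in>(\<lambda>e. phi ` e) ` grid_E (cube d). g e)
        = (\<Sum>bk\<in>gP (cube (Suc m)). g (ep (std p (fst bk), snd bk)))"
      using img sum_std_E[OF p, of g] hd dm by simp
    let ?G = "\<lambda>bk. g (ep (std p (fst bk), snd bk))"
    have stdc: "std p (b @ [c]) = std p' b @ [pd + c - 1]" if "b \<in> grid_V (cube m)" for b c
      using std_snoc[of p' b pd c] that lp' psd by (simp add: VQ_iff)
    have sin: "std p' b \<in> grid_V ns'" if "b \<in> grid_V (cube m)" for b
      using std_in[OF p'V p'lt] that lns' by simp
    have lsb: "length (std p' b) = m" for b using lp' by simp
    define hv where "hv b = (if odd (sum_list (std p' b)) then pd - 1 else nd - 1 - pd)" for b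
    have Vb: "?G (b @ [1], m) = ft (std p' b) + nd * M + hv b * N" if b: "b \<in> grid_V (cube m)" for b
    proof -
      have "?G (b@[1], m) = g (ep (std p' b @ [pd], m))" using stdc[OF b, of 1] by simp
      also have "\<dots> = (if odd (sum_list (std p' b)) then ft (std p' b) + nd * M + (pd - 1) * N
                       else ft (std p' b) + nd * M + (nd - 1 - pd) * N)"
        using gform[OF sin[OF b] pd1(1) pd1(2), of m] dm pdn nsm lsb[of b] by (simp add: nth_append)
      finally show ?thesis by (simp add: hv_def)
    qed
    define reg where "reg k = ((odd d \<and> k + 1 \<le> d - 1) \<or> (even d \<and> k + 1 \<le> d - 2))" for k
    define X where "X = (pd - 1) + pd"
    define Y where "Y = (nd - pd) + (nd - (pd + 1))"
    define cf where "cf k b = (if reg k then (if odd (k+1) then X else Y)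
        else (if odd (sum_list (take (m - 1) (std p' b))) then X else Y))" for k b
    have Hb: "?G (b @ [1], k) + ?G (b @ [2], k) = 2 * gt (ep (std p' b, k)) + cf k b * M"
      if bk: "(b, k) \<in> gP (cube m)" for b k
    proof -
      have b: "b \<in> grid_V (cube m)" "k < m" "b!k = 1" using bk by (auto simp: gP_cube)
      have kk: "(std p' b @ [t]) ! k < ns ! k" for t
        using b lsb[of b] lp' p'lt lns' ns'k[OF b(2)] by (simp add: nth_append std_nth)
      have km: "k \<noteq> m" "k < d" using b dm by auto
      have "?G (b @ [1], k) = g (ep (std p' b @ [pd], k))" using stdc[OF b(1), of 1] by simp
      also have "\<dots> = (if reg k then (if odd (k + 1) then gt (ep (std p' b, k)) + (pd - 1) * M
             else gt (ep (std p' b, k)) + (nd - pd) * M)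
           else (if odd (sum_list (take (m - 1) (std p' b))) then gt (ep (std p' b, k)) + (pd - 1) * M
             else gt (ep (std p' b, k)) + (nd - pd) * M))"
        using gform[OF sin[OF b(1)] pd1(1) pd1(2) km(2) kk] km(1) by (simp add: reg_def)
      finally have g1: "?G (b @ [1], k) = \<dots>" .
      have "?G (b @ [2], k) = g (ep (std p' b @ [pd + 1], k))" using stdc[OF b(1), of 2] by simp
      also have "\<dots> = (if reg k then (if odd (k + 1) then gt (ep (std p' b, k)) + pd * M
             else gt (ep (std p' b, k)) + (nd - (pd + 1)) * M)
           else (if odd (sum_list (take (m - 1) (std p' b))) then gt (ep (std p' b, k)) + pd * M
             else gt (ep (std p' b, k)) + (nd - (pd + 1)) * M))"
        using gform[OF sin[OF b(1)] _ _ km(2) kk, of "pd + 1"] pd1 pdn km(1) by (simp add: reg_def)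
      finally have g2: "?G (b @ [2], k) = \<dots>" .
      show ?thesis unfolding g1 g2 cf_def X_def Y_def by (simp add: algebra_simps)
    qed
    have m0: "0 < m" using m2 by simp
    have flipsl: "sum_list (take r (std p' (b[0:=2]))) = sum_list (take r (std p' b)) + 1"
      if "b \<in> grid_V (cube m)" "b!0 = 1" "0 < r" for b r
      using sum_std_flip[of b p' r] that lp' m0 by simp
    have sumhv: "(\<Sum>b\<in>grid_V (cube m). hv b) = 2 ^ (m - 1) * (nd - 2)"
    proof -
      have "(\<Sum>b\<in>grid_V (cube m). hv b) = card {b\<in>grid_V (cube m). b!0 = 1} * (nd - 2)"
      proof (rule flip_sum[OF subset_refl m0])
        show "\<forall>b\<in>grid_V (cube m). b!0 = 1 \<longrightarrow> b[0:=2] \<in> grid_V (cube m)" by (auto intro: VQ_upd)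
        show "\<forall>b\<in>grid_V (cube m). b!0 = 2 \<longrightarrow> b[0:=1] \<in> grid_V (cube m)" by (auto intro: VQ_upd)
        show "\<forall>b\<in>grid_V (cube m). b!0 = 1 \<longrightarrow> hv b + hv (b[0:=2]) = nd - 2"
        proof (intro ballI impI)
          fix b assume b: "b \<in> grid_V (cube m)" "b!0 = 1"
          have "sum_list (std p' (b[0:=2])) = sum_list (std p' b) + 1"
            using flipsl[OF b m0] lsb by simp
          then have par: "odd (sum_list (std p' (b[0:=2]))) \<longleftrightarrow> even (sum_list (std p' b))" by simp
          show "hv b + hv (b[0:=2]) = nd - 2"
          proof (cases "odd (sum_list (std p' b))")
            case True
            then have "hv b = pd - 1" "hv (b[0:=2]) = nd - 1 - pd" using par by (simp_all add: hv_def)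
            then show ?thesis using pd1 pdn by simp
          next
            case False
            then have "hv b = nd - 1 - pd" "hv (b[0:=2]) = pd - 1" using par by (simp_all add: hv_def)
            then show ?thesis using pd1 pdn by simp
          qed
        qed
      qed
      then show ?thesis using card_VQ1[OF m0] by simp
    qed
    have XY: "X + Y = 2 * (nd - 1)" using pd1 pdn by (simp add: X_def Y_def)
    have sumcf: "(\<Sum>bk\<in>gP (cube m). cf (snd bk) (fst bk)) = 2 ^ (m - 1) * m * (nd - 1)"
    proof -
      have reg_inner: "(\<Sum>b\<in>{b\<in>grid_V (cube m). b!k = 1}. cf k b) = 2 ^ (m - 1) * (if odd (k+1) then X else Y)"
        if "k < m" "reg k" for k
        using that card_VQ1[of k m] by (simp add: cf_def)
      have "(\<Sum>bk\<in>gP (cube m). cf (snd bk) (fst bk)) = (\<Sum>k<m. \<Sum>b\<in>{b\<in>grid_V (cube m). b!k = 1}. cf k b)"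
        by (rule gP_sum_k)
      also have "\<dots> = 2 ^ (m - 1) * m * (nd - 1)"
      proof (cases "odd d")
        case True
        then have "even m" using dm by simp
        then obtain q where q: "m = 2 * q" by (rule evenE)
        have "(\<Sum>k<m. \<Sum>b\<in>{b\<in>grid_V (cube m). b!k = 1}. cf k b) = (\<Sum>k<m. 2 ^ (m - 1) * (if odd (k+1) then X else Y))"
        proof (rule sum.cong[OF refl])
          fix k assume k: "k \<in> {..<m}"
          then have "reg k" using True dm by (simp add: reg_def)
          then show "(\<Sum>b\<in>{b\<in>grid_V (cube m). b!k = 1}. cf k b) = 2 ^ (m - 1) * (if odd (k+1) then X else Y)"
            using reg_inner[of k] k by simp
        qed
        also have "\<dots> = 2 ^ (m - 1) * (\<Sum>k<2*q. if odd (k+1) then X else Y)"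
          by (simp add: sum_distrib_left q)
        also have "\<dots> = 2 ^ (m - 1) * (q * (X + Y))" using sum_alt[of X Y q] by simp
        finally show ?thesis using XY q by simp
      next
        case False
        then have "odd m" using dm by simp
        then obtain q where q: "m = 2 * q + 1" by (rule oddE)
        have q1: "q \<ge> 1" using q m2 by simp
        have "(\<Sum>k<m. \<Sum>b\<in>{b\<in>grid_V (cube m). b!k = 1}. cf k b)
            = (\<Sum>k<2*q. \<Sum>b\<in>{b\<in>grid_V (cube m). b!k = 1}. cf k b) + (\<Sum>b\<in>{b\<in>grid_V (cube m). b!(2*q) = 1}. cf (2*q) b)"
          using q by simp
        also have "(\<Sum>k<2*q. \<Sum>b\<in>{b\<in>grid_V (cube m). b!k = 1}. cf k b) = (\<Sum>k<2*q. 2 ^ (m - 1) * (if odd (k+1) then X else Y))"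
        proof (rule sum.cong[OF refl])
          fix k assume k: "k \<in> {..<2*q}"
          then have "reg k" using False dm q by (simp add: reg_def)
          moreover have "k < m" using k q by simp
          ultimately show "(\<Sum>b\<in>{b\<in>grid_V (cube m). b!k = 1}. cf k b) = 2 ^ (m - 1) * (if odd (k+1) then X else Y)"
            using reg_inner[of k] by simp
        qed
        also have "\<dots> = 2 ^ (m - 1) * (q * (X + Y))" using sum_alt[of X Y q] by (simp add: sum_distrib_left[symmetric])
        also have "(\<Sum>b\<in>{b\<in>grid_V (cube m). b!(2*q) = 1}. cf (2*q) b)
            = (\<Sum>b\<in>{b\<in>grid_V (cube m). b!(2*q) = 1}. if odd (sum_list (take (m - 1) (std p' b))) then X else Y)"
        proof (rule sum.cong[OF refl])
          have "\<not> reg (2*q)" using False dm q by (simp add: reg_def)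
          then show "cf (2*q) b = (if odd (sum_list (take (m - 1) (std p' b))) then X else Y)" for b
            by (simp add: cf_def)
        qed
        also have "\<dots> = card {b\<in>{b\<in>grid_V (cube m). b!(2*q) = 1}. b!0 = 1} * (X + Y)"
        proof (rule flip_sum[OF _ m0])
          show "{b\<in>grid_V (cube m). b!(2*q) = 1} \<subseteq> grid_V (cube m)" by blast
          show "\<forall>b\<in>{b\<in>grid_V (cube m). b!(2*q) = 1}. b!0 = 1 \<longrightarrow> b[0:=2] \<in> {b\<in>grid_V (cube m). b!(2*q) = 1}"
            using q1 by (auto intro: VQ_upd)
          show "\<forall>b\<in>{b\<in>grid_V (cube m). b!(2*q) = 1}. b!0 = 2 \<longrightarrow> b[0:=1] \<in> {b\<in>grid_V (cube m). b!(2*q) = 1}"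
            using q1 by (auto intro: VQ_upd)
          show "\<forall>b\<in>{b\<in>grid_V (cube m). b!(2*q) = 1}. b!0 = 1 \<longrightarrow>
              (if odd (sum_list (take (m - 1) (std p' b))) then X else Y) +
              (if odd (sum_list (take (m - 1) (std p' (b[0:=2])))) then X else Y) = X + Y"
          proof (intro ballI impI)
            fix b assume b: "b \<in> {b\<in>grid_V (cube m). b!(2*q) = 1}" "b!0 = 1"
            have "sum_list (take (m - 1) (std p' (b[0:=2]))) = sum_list (take (m - 1) (std p' b)) + 1"
              using flipsl[of b "m - 1"] b m2 by simp
            then show "(if odd (sum_list (take (m - 1) (std p' b))) then X else Y) +
              (if odd (sum_list (take (m - 1) (std p' (b[0:=2])))) then X else Y) = X + Y" by simp
          qed
        qed
        also have "card {b\<in>{b\<in>grid_V (cube m). b!(2*q) = 1}. b!0 = 1} = 2 ^ (m - 2)"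
          using card_VQ2[of 0 m "2*q"] q q1 by simp
        finally have "(\<Sum>k<m. \<Sum>b\<in>{b\<in>grid_V (cube m). b!k = 1}. cf k b) = 2 ^ (m - 1) * (q * (X + Y)) + 2 ^ (m - 2) * (X + Y)" .
        moreover have "2 ^ (m - 1) * (q * (X + Y)) + 2 ^ (m - 2) * (X + Y) = 2 ^ (m - 1) * m * (nd - 1)"
        proof -
          have pw: "(2::nat) ^ (m - 1) = 2 * 2 ^ (m - 2)" using m2 by (cases "m - 1") auto
          obtain K P where KP: "nd - 1 = K" "(2::nat) ^ (m - 2) = P" by blast
          show ?thesis
            apply (unfold XY pw)
            apply (unfold KP)
            apply (simp add: q algebra_simps)
            done
        qed
        ultimately show ?thesis by simp
      qed
      finally show ?thesis .
    qed
    have sumV: "(\<Sum>b\<in>grid_V (cube m). ?G (b @ [1], m)) = S + 2 ^ m * nd * M + 2 ^ (m - 1) * (nd - 2) * N"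
    proof -
      have "(\<Sum>b\<in>grid_V (cube m). ?G (b @ [1], m)) = (\<Sum>b\<in>grid_V (cube m). ft (std p' b) + nd * M + hv b * N)"
        by (rule sum.cong[OF refl]) (rule Vb)
      also have "\<dots> = (\<Sum>b\<in>grid_V (cube m). ft (std p' b)) + card (grid_V (cube m)) * (nd * M) + (\<Sum>b\<in>grid_V (cube m). hv b) * N"
        by (simp add: sum.distrib sum_distrib_right)
      finally show ?thesis using ftS[OF p'V p'lt] card_VQ[of m] sumhv by simp
    qed
    have sumH: "(\<Sum>bk\<in>gP (cube m). ?G (fst bk @ [1], snd bk) + ?G (fst bk @ [2], snd bk))
        = 2 * S' + 2 ^ (m - 1) * m * (nd - 1) * M"
    proof -
      have "(\<Sum>bk\<in>gP (cube m). ?G (fst bk @ [1], snd bk) + ?G (fst bk @ [2], snd bk))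
          = (\<Sum>bk\<in>gP (cube m). 2 * gt (ep (std p' (fst bk), snd bk)) + cf (snd bk) (fst bk) * M)"
        by (rule sum.cong[OF refl]) (use Hb in \<open>auto simp del: One_nat_def\<close>)
      also have "\<dots> = 2 * (\<Sum>bk\<in>gP (cube m). gt (ep (std p' (fst bk), snd bk))) + (\<Sum>bk\<in>gP (cube m). cf (snd bk) (fst bk)) * M"
        by (simp add: sum.distrib sum_distrib_right sum_distrib_left)
      finally show ?thesis using gtS[OF p'V p'lt] sumcf by simp
    qed
    have "(\<Sum>e\<in>(\<lambda>e. phi ` e) ` grid_E (cube d). g e) = S + 2 ^ m * nd * M + 2 ^ (m - 1) * (nd - 2) * N + (2 * S' + 2 ^ (m - 1) * m * (nd - 1) * M)"
      using sum0 gP_split[of ?G m] sumV sumH by simp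
    also have "\<dots> = C"
    proof -
      have e1: "d - 2 = m - 1" "d - 1 = m" using dm by auto
      have e2: "(2::nat) ^ m = 2 * 2 ^ (m - 1)" using m2 by (cases m) auto
      show ?thesis unfolding C_def e1 ndd[unfolded e1(2)] e2 by (simp add: algebra_simps)
    qed
    finally show ?thesis .
  qed
  define K where "K = nd * M + (nd - 1) * N"
  have epbij: "bij_betw ep (gP ns) (grid_E ns)" by (rule bij_betw_imageI[OF inj_ep grid_E_eq[symmetric]])
  have epbij': "bij_betw ep (gP ns') (grid_E ns')" by (rule bij_betw_imageI[OF inj_ep grid_E_eq[symmetric]])
  define qv where "qv = (\<lambda>xt::nat list \<times> nat. (fst xt @ [snd xt], m))"
  define qh where "qh = (\<lambda>xkt::(nat list \<times> nat) \<times> nat. (fst (fst xkt) @ [snd xkt], snd (fst xkt)))"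
  define Dv where "Dv = grid_V ns' \<times> {1..nd - 1}"
  define Dh where "Dh = gP ns' \<times> {1..nd}"
  have lx'V: "length x' = m" if "x' \<in> grid_V ns'" for x' using that lns' by (simp add: grid_V_iff)
  have injv: "inj_on qv Dv" by (rule inj_onI) (auto simp: qv_def Dv_def prod_eq_iff dest: lx'V)
  have injh: "inj_on qh Dh" by (rule inj_onI) (auto simp: qh_def Dh_def gP_def prod_eq_iff dest: lx'V)
  have Pu: "gP ns = qh ` Dh \<union> qv ` Dv"
  proof
    show "gP ns \<subseteq> qh ` Dh \<union> qv ` Dv"
    proof
      fix xk assume xk: "xk \<in> gP ns"
      obtain x k where e: "xk = (x, k)" by (cases xk)
      have x: "x \<in> grid_V ns" "k < d" "x!k < ns!k" using xk e hd by (auto simp: gP_def)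
      have lx: "length x = Suc m" using x(1) hd dm by (simp add: grid_V_iff)
      then have "x \<noteq> []" by auto
      then have xs: "x = butlast x @ [last x]" by simp
      have lx': "length (butlast x) = m" using lx by simp
      have xx: "butlast x \<in> grid_V ns'" "1 \<le> last x" "last x \<le> nd"
        using x(1) xs nsd grid_V_snoc[of "butlast x" "last x" ns' nd] by auto
      show "xk \<in> qh ` Dh \<union> qv ` Dv"
      proof (cases "k = m")
        case True
        have "last x = x ! m" using xs lx' by (metis nth_append_length)
        then have "last x < nd" using x(3) True nsm by simp
        then have "(butlast x, last x) \<in> Dv" using xx by (simp add: Dv_def)
        moreover have "xk = qv (butlast x, last x)" using e True xs by (simp add: qv_def)
        ultimately show ?thesis by blast
      next
        case False
        then have km: "k < m" using x(2) dm by simp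
        have "butlast x ! k = x ! k" using xs lx' km by (metis nth_append)
        then have "butlast x ! k < ns' ! k" using x(3) ns'k[OF km] by simp
        then have "((butlast x, k), last x) \<in> Dh" using xx km lns' by (simp add: Dh_def gP_def)
        moreover have "xk = qh ((butlast x, k), last x)" using e xs by (simp add: qh_def)
        ultimately show ?thesis by blast
      qed
    qed
    show "qh ` Dh \<union> qv ` Dv \<subseteq> gP ns"
    proof
      fix xk assume "xk \<in> qh ` Dh \<union> qv ` Dv"
      then consider (h) x' k t where "xk = (x' @ [t], k)" "(x', k) \<in> gP ns'" "1 \<le> t" "t \<le> nd"
        | (v) x' t where "xk = (x' @ [t], m)" "x' \<in> grid_V ns'" "1 \<le> t" "t \<le> nd - 1"
        by (auto simp: qh_def qv_def Dh_def Dv_def)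
      then show "xk \<in> gP ns"
      proof cases
        case h
        have x': "x' \<in> grid_V ns'" "k < m" "x'!k < ns'!k" using h(2) lns' by (auto simp: gP_def)
        have "x' @ [t] \<in> grid_V ns" using x' h nsd grid_V_snoc by simp
        moreover have "(x' @ [t]) ! k < ns ! k" using x' lx'V[OF x'(1)] ns'k[OF x'(2)] by (simp add: nth_append)
        ultimately show ?thesis using h(1) x'(2) hd dm by (simp add: gP_def)
      next
        case v
        have "x' @ [t] \<in> grid_V ns" using v nsd grid_V_snoc by simp
        moreover have "(x' @ [t]) ! m < ns ! m" using v lx'V[OF v(2)] nsm nd2 by (simp add: nth_append)
        ultimately show ?thesis using v(1) hd dm by (simp add: gP_def)
      qed
    qed
  qed
  have bv: "bij_betw (g \<circ> ep \<circ> qv) Dv {nd * M + 1 .. nd * M + (nd - 1) * N}"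
  proof -
    have "bij_betw (\<lambda>ab. nd * M + ft (fst ab) + (\<lambda>x' t. if odd (sum_list x') then t - 1 else (nd - 1) - t) (fst ab) (snd ab) * N)
        (grid_V ns' \<times> {1..nd - 1}) {nd * M + 1 .. nd * M + (nd - 1) * N}"
      by (rule bij_pair[OF ftbij bij_tif])
    then show ?thesis unfolding Dv_def
    proof (rule bij_betw_cong[THEN iffD1, rotated])
      fix xt assume xt: "xt \<in> grid_V ns' \<times> {1..nd - 1}"
      then have x': "fst xt \<in> grid_V ns'" and t: "1 \<le> snd xt" "snd xt \<le> nd - 1" by auto
      have "(fst xt @ [snd xt]) ! m < ns ! m" using t nsm lx'V[OF x'] nd2 by (simp add: nth_append)
      then show "nd * M + ft (fst xt) + (\<lambda>x' t. if odd (sum_list x') then t - 1 else (nd - 1) - t) (fst xt) (snd xt) * N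
          = (g \<circ> ep \<circ> qv) xt"
        using gform[OF x' t(1) _ _ , of m] t dm by (simp add: qv_def)
    qed
  qed
  define P where "P xk = (if (odd d \<and> snd xk + 1 \<le> d - 1) \<or> (even d \<and> snd xk + 1 \<le> d - 2)
      then odd (snd xk + 1) else odd (sum_list (take (m - 1) (fst xk))))" for xk :: "nat list \<times> nat"
  have bh: "bij_betw (g \<circ> ep \<circ> qh) Dh {1 .. nd * M}"
  proof -
    have fb: "bij_betw (\<lambda>xk. gt (ep xk)) (gP ns') {1..M}"
      using bij_betw_trans[OF epbij' gtbij] by (simp add: comp_def)
    have "bij_betw (\<lambda>ab. 0 + gt (ep (fst ab)) + (\<lambda>xk t. if P xk then t - 1 else nd - t) (fst ab) (snd ab) * M)
        (gP ns' \<times> {1..nd}) {0 + 1 .. 0 + nd * M}"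
      by (rule bij_pair[OF fb bij_tif])
    then have "bij_betw (\<lambda>ab. gt (ep (fst ab)) + (if P (fst ab) then snd ab - 1 else nd - snd ab) * M)
        (gP ns' \<times> {1..nd}) {1 .. nd * M}" by simp
    then show ?thesis unfolding Dh_def
    proof (rule bij_betw_cong[THEN iffD1, rotated])
      fix xkt assume xkt: "xkt \<in> gP ns' \<times> {1..nd}"
      obtain x' k t where e: "xkt = ((x', k), t)" by (metis prod.collapse)
      have x': "x' \<in> grid_V ns'" and k: "k < m" "x'!k < ns'!k" and t: "1 \<le> t" "t \<le> nd"
        using xkt e lns' by (auto simp: gP_def)
      have kk: "(x' @ [t]) ! k < ns ! k" using k lx'V[OF x'] ns'k[OF k(1)] by (simp add: nth_append)
      have km: "k < d" "k \<noteq> m" using k dm by auto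
      show "gt (ep (fst xkt)) + (if P (fst xkt) then snd xkt - 1 else nd - snd xkt) * M
          = (g \<circ> ep \<circ> qh) xkt"
        using gform[OF x' t km(1) kk] km(2) e by (simp add: qh_def P_def)
    qed
  qed
  have bv': "bij_betw (g \<circ> ep) (qv ` Dv) {nd * M + 1 .. nd * M + (nd - 1) * N}"
    by (subst bij_betw_comp_iff[OF bij_betw_imageI[OF injv refl]]) (rule bv)
  have bh': "bij_betw (g \<circ> ep) (qh ` Dh) {1 .. nd * M}"
    by (subst bij_betw_comp_iff[OF bij_betw_imageI[OF injh refl]]) (rule bh)
  have bP: "bij_betw (g \<circ> ep) (gP ns) {1..K}"
  proof -
    have "bij_betw (g \<circ> ep) (qh ` Dh \<union> qv ` Dv) ({1 .. nd * M} \<union> {nd * M + 1 .. nd * M + (nd - 1) * N})"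
      by (rule bij_betw_combine[OF bh' bv']) auto
    moreover have "{1 .. nd * M} \<union> {nd * M + 1 .. nd * M + (nd - 1) * N} = {1..K}"
      by (auto simp: K_def)
    ultimately show ?thesis using Pu by simp
  qed
  have bijE: "bij_betw g (grid_E ns) {1..K}"
    by (subst bij_betw_comp_iff[OF epbij]) (rule bP)
  have cardE: "card (grid_E ns) = K" using bij_betw_same_card[OF bijE] by simp
  show ?thesis unfolding magic_edge_labeling_def
  proof (intro conjI allI impI)
    show "bij_betw g (grid_E ns) {1..card (grid_E ns)}" using bijE cardE by simp
    fix phi assume "subgraph_embedding (grid_V (cube d)) (grid_E (cube d)) (grid_V ns) (grid_E ns) phi"
    from magic[OF this] show "(\<Sum>e\<in>(\<lambda>e. phi ` e) ` grid_E (cube d). g e) = S + 2 * S' + 2 ^ (d - 2) * (ns ! (d - 1) - 2) * N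
        + 2 ^ (d - 2) * (2 * ns ! (d - 1) + (d - 1) * (ns ! (d - 1) - 1)) * M" by (simp add: C_def)
  qed
qed


end
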